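(* There exist a Cantor set $W\subseteq\mathbb{R}^2$, a metric on $W$ compatible with its topology, and a homeomorphism $G\colon W\to W$ which is not transitive, has the (LRS) property with respect to that metric, and whose set of periodic points consists of a single fixed point.
   Context: A Cantor set is a compact metric space that is totally disconnected and has no isolated points. A map $f\colon X\to X$ on a metric space $(X,d)$ has the (LRS) (locally radially shrinking) property if for every $x\in X$ there is $\varepsilon_x>0$ such that $0<d(x,y)<\varepsilon_x$ implies $d(f(x),f(y))<d(x,y)$. $G$ is transitive if for all nonempty open $U,V\subseteq W$ there is $n\in\mathbb{N}$ with $G^n(U)\cap V\neq\emptyset$. A periodic point is $x$ with $G^n(x)=x$ for some $n\geq 1$. *)

theory Defs
  imports "HOL-Analysis.Analysis"
begin

definition totally_disconnected_set :: "'a::topological_space set \<Rightarrow> bool" where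
  "totally_disconnected_set W \<longleftrightarrow> (\<forall>S. S \<subseteq> W \<and> connected S \<longrightarrow> (\<exists>a. S \<subseteq> {a}))"

definition cantor_set :: "'a::metric_space set \<Rightarrow> bool" where
  "cantor_set W \<longleftrightarrow> compact W \<and> totally_disconnected_set W \<and> (\<forall>x\<in>W. x islimpt W)"

definition LRS :: "'a set \<Rightarrow> ('a \<Rightarrow> 'a \<Rightarrow> real) \<Rightarrow> ('a \<Rightarrow> 'a) \<Rightarrow> bool" where
  "LRS W d f \<longleftrightarrow> (\<forall>x\<in>W. \<exists>\<epsilon>>0. \<forall>y\<in>W. 0 < d x y \<and> d x y < \<epsilon> \<longrightarrow> d (f x) (f y) < d x y)"

definition transitive_on :: "'a::topological_space set \<Rightarrow> ('a \<Rightarrow> 'a) \<Rightarrow> bool" where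
  "transitive_on W G \<longleftrightarrow>
     (\<forall>U V. openin (top_of_set W) U \<and> openin (top_of_set W) V \<and> U \<noteq> {} \<and> V \<noteq> {}
        \<longrightarrow> (\<exists>n\<ge>1. (G ^^ n) ` U \<inter> V \<noteq> {}))"

definition periodic_points :: "'a set \<Rightarrow> ('a \<Rightarrow> 'a) \<Rightarrow> 'a set" where
  "periodic_points W G = {x \<in> W. \<exists>n\<ge>1. (G ^^ n) x = x}"

end

theory Submission
  imports Defs "HOL-Library.Discrete_Functions"
begin


type_synonym bits = "nat \<Rightarrow> bool"

definition add1 :: "bits \<Rightarrow> bits" where
  "add1 w = (\<lambda>i. if (\<forall>j<i. w j) then \<not> w i else w i)"

definition sub1 :: "bits \<Rightarrow> bits" where
  "sub1 w = (\<lambda>i. if (\<forall>j<i. \<not> w j) then \<not> w i else w i)"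

lemma add1_all: "(\<forall>j<i. \<not> add1 w j) \<longleftrightarrow> (\<forall>j<i. w j)"
proof (induction i)
  case 0 then show ?case by simp
next
  case (Suc i)
  have "(\<forall>j<Suc i. \<not> add1 w j) \<longleftrightarrow> (\<forall>j<i. \<not> add1 w j) \<and> \<not> add1 w i"
    using less_Suc_eq by auto
  also have "\<dots> \<longleftrightarrow> (\<forall>j<i. w j) \<and> \<not> add1 w i" using Suc by simp
  also have "\<dots> \<longleftrightarrow> (\<forall>j<i. w j) \<and> w i"
    by (auto simp: add1_def)
  also have "\<dots> \<longleftrightarrow> (\<forall>j<Suc i. w j)" using less_Suc_eq by auto
  finally show ?case .
qed

lemma sub1_all: "(\<forall>j<i. sub1 w j) \<longleftrightarrow> (\<forall>j<i. \<not> w j)"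
proof (induction i)
  case 0 then show ?case by simp
next
  case (Suc i)
  have "(\<forall>j<Suc i. sub1 w j) \<longleftrightarrow> (\<forall>j<i. sub1 w j) \<and> sub1 w i"
    using less_Suc_eq by auto
  also have "\<dots> \<longleftrightarrow> (\<forall>j<i. \<not> w j) \<and> sub1 w i" using Suc by simp
  also have "\<dots> \<longleftrightarrow> (\<forall>j<i. \<not> w j) \<and> \<not> w i"
    by (auto simp: sub1_def)
  also have "\<dots> \<longleftrightarrow> (\<forall>j<Suc i. \<not> w j)" using less_Suc_eq by auto
  finally show ?case .
qed

lemma add1_sub1 [simp]: "add1 (sub1 w) = w"
proof
  fix i show "add1 (sub1 w) i = w i"
    unfolding add1_def using sub1_all[of i w] by (auto simp: sub1_def)
qed

lemma sub1_add1 [simp]: "sub1 (add1 w) = w"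
proof
  fix i show "sub1 (add1 w) i = w i"
    unfolding sub1_def using add1_all[of i w] by (auto simp: add1_def)
qed

lemma add1_inj: "add1 w = add1 w' \<Longrightarrow> w = w'"
  by (metis sub1_add1)

lemma add1_agree: "(\<forall>j<i. w j = w' j) \<Longrightarrow> add1 w i = add1 w' i \<longleftrightarrow> w i = w' i"
  unfolding add1_def by auto

lemma add1_agree_below: "(\<forall>j<i. w j = w' j) \<Longrightarrow> (\<forall>j<i. add1 w j = add1 w' j)"
  using add1_agree by (metis order.strict_trans)

definition val :: "nat \<Rightarrow> bits \<Rightarrow> nat" where
  "val L w = (\<Sum>i<L. if w i then 2^i else 0)"

lemma val_Suc: "val (Suc L) w = val L w + (if w L then 2^L else 0)"
  by (simp add: val_def)

lemma val_lt: "val L w < 2^L"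
  by (induction L) (auto simp: val_Suc val_def[of 0])

lemma val_all: "(\<forall>j<L. w j) \<longleftrightarrow> val L w = 2^L - 1"
proof (induction L)
  case 0 then show ?case by (simp add: val_def)
next
  case (Suc L)
  have lt: "val L w < 2^L" by (rule val_lt)
  show ?case
  proof (cases "w L")
    case True
    then show ?thesis using Suc lt by (auto simp: val_Suc less_Suc_eq)
  next
    case False
    then show ?thesis using lt by (auto simp: val_Suc)
  qed
qed

lemma val_add1: "val L (add1 w) = (val L w + 1) mod 2^L"
proof (induction L)
  case 0 then show ?case by (simp add: val_def)
next
  case (Suc L)
  have lt: "val L w < 2^L" by (rule val_lt)
  have p2: "(2::nat)^Suc L = 2 * 2^L" by simp
  show ?case
  proof (cases "\<forall>j<L. w j")
    case True
    then have v0: "val L w = 2^L - 1" using val_all by blast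
    have pos: "(1::nat) \<le> 2^L" by simp
    have v: "val L w + 1 = 2^L" using v0 pos by linarith
    then have a: "val L (add1 w) = 0" using Suc by simp
    have b: "add1 w L = (\<not> w L)" using True by (simp add: add1_def)
    have e1: "val (Suc L) (add1 w) = (if w L then 0 else 2^L)"
      using a b by (simp add: val_Suc)
    have e2: "val (Suc L) w + 1 = (if w L then 2 * 2^L else 2^L)"
      using v by (simp add: val_Suc)
    show ?thesis
    proof (cases "w L")
      case True
      then show ?thesis using e1 e2 p2 by simp
    next
      case False
      have "(2::nat)^L < 2 * 2^L" by simp
      then show ?thesis using e1 e2 p2 False by simp
    qed
  next
    case False
    then have v0: "val L w \<noteq> 2^L - 1" using val_all by blast
    have v: "val L w + 1 < 2^L" using v0 lt by linarith
    then have a: "val L (add1 w) = val L w + 1" using Suc by simp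
    have b: "add1 w L = w L" using False by (simp add: add1_def)
    have e1: "val (Suc L) (add1 w) = val L w + 1 + (if w L then 2^L else 0)"
      using a b by (simp add: val_Suc)
    have e2: "val (Suc L) w + 1 = val L w + 1 + (if w L then 2^L else 0)"
      by (simp add: val_Suc)
    have "val L w + 1 + (if w L then 2^L else 0) < 2 * 2^L" using v by auto
    then show ?thesis using e1 e2 p2 by simp
  qed
qed

lemma val_eq: "(\<forall>i<L. w i = w' i) \<Longrightarrow> val L w = val L w'"
  unfolding val_def by (rule sum.cong) auto

lemma val_mod: "a \<le> b \<Longrightarrow> val a z = val b z mod 2^a"
proof (induction b)
  case 0 then show ?case by (simp add: val_def)
next
  case (Suc b)
  show ?case
  proof (cases "a = Suc b")
    case True then show ?thesis using val_lt[of a z] by simp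
  next
    case False
    then have "a \<le> b" using Suc by simp
    then have "val a z = val b z mod 2^a" using Suc by simp
    moreover have "(2::nat)^b = 2^(b-a) * 2^a" using \<open>a \<le> b\<close>
      by (simp add: power_add[symmetric])
    moreover have "(val b z + (if z b then 2^b else 0)) mod 2^a = val b z mod 2^a"
      using calculation(2) by (simp only: if_distrib) (simp only: mod_mult_self1 split: if_split, simp)
    ultimately show ?thesis by (simp add: val_Suc)
  qed
qed

definition addn :: "nat \<Rightarrow> bits \<Rightarrow> bits" where "addn n w = (add1 ^^ n) w"

lemma val_addn: "val L (addn n w) = (val L w + n) mod 2^L"
proof (induction n)
  case 0 then show ?case by (simp add: addn_def val_lt)
next
  case (Suc n)
  have "val L (addn (Suc n) w) = (val L (addn n w) + 1) mod 2^L"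
    by (simp add: addn_def val_add1)
  also have "\<dots> = (val L w + Suc n) mod 2^L" using Suc by (simp add: mod_Suc_eq)
  finally show ?case .
qed

lemma addn_ne: "n \<ge> 1 \<Longrightarrow> addn n z \<noteq> z"
proof
  assume "n \<ge> 1" "addn n z = z"
  then have "val n (addn n z) = val n z" by simp
  then have "(val n z + n) mod 2^n = val n z mod 2^n" by (simp add: val_addn val_lt)
  then have "(val n z + n) mod 2^n = (val n z + 0) mod 2^n" by simp
  then have "(2::nat)^n dvd (val n z + n) - val n z"
    using mod_eq_dvd_iff_nat[of "val n z" "val n z + n" "2^n"] by simp
  then have "(2::nat)^n dvd n" by simp
  moreover have "n < 2^n" by (rule less_exp)
  ultimately show False using \<open>n \<ge> 1\<close> by (simp add: nat_dvd_not_less)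
qed



definition ct :: "bits \<Rightarrow> nat \<Rightarrow> real" where
  "ct w i = (if w i then 2 * (1/3)^Suc i else 0)"

definition gq :: "nat \<Rightarrow> real" where "gq i = 2 * (1/3)^Suc i"

definition phi :: "bits \<Rightarrow> real" where "phi w = suminf (ct w)"

lemma gq_summable: "summable gq"
  unfolding gq_def by (intro summable_mult summable_mult2) (simp add: summable_geometric)

lemma gq_sum: "suminf gq = 1"
proof -
  have "gq = (\<lambda>i. (2/3) * (1/3)^i)" by (auto simp: gq_def)
  moreover have "suminf (\<lambda>i. (2/3::real) * (1/3)^i) = (2/3) * suminf (\<lambda>i. (1/3::real)^i)"
    by (rule suminf_mult) (simp add: summable_geometric)
  moreover have "suminf (\<lambda>i. (1/3::real)^i) = 3/2"
    using suminf_geometric[of "1/3::real"] by simp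
  ultimately show ?thesis by simp
qed

lemma gq_tail: "(\<Sum>i. gq (i + n)) = (1/3)^n"
proof -
  have "(\<lambda>i. gq (i + n)) = (\<lambda>i. (1/3)^n * gq i)"
    by (auto simp: gq_def power_add)
  moreover have "(\<Sum>i. (1/3::real)^n * gq i) = (1/3)^n * suminf gq"
    by (rule suminf_mult) (rule gq_summable)
  ultimately show ?thesis using gq_sum by simp
qed

lemma ct_nonneg: "0 \<le> ct w i" by (simp add: ct_def)
lemma ct_le: "ct w i \<le> gq i" by (simp add: ct_def gq_def)

lemma ct_summable: "summable (ct w)"
proof (rule summable_comparison_test[OF _ gq_summable])
  show "\<exists>N. \<forall>n\<ge>N. norm (ct w n) \<le> gq n" using ct_nonneg ct_le by auto
qed

lemma ct_tail_summable: "summable (\<lambda>i. ct w (i + n))"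
  using ct_summable summable_iff_shift by blast

lemma gq_tail_summable: "summable (\<lambda>i. gq (i + n))"
  using gq_summable summable_iff_shift by blast

lemma tail_bounds: "0 \<le> (\<Sum>i. ct w (i + n))" "(\<Sum>i. ct w (i + n)) \<le> (1/3)^n"
proof -
  show "0 \<le> (\<Sum>i. ct w (i + n))" by (rule suminf_nonneg[OF ct_tail_summable]) (simp add: ct_nonneg)
  have "(\<Sum>i. ct w (i + n)) \<le> (\<Sum>i. gq (i + n))"
    by (rule suminf_le) (auto simp: ct_le ct_summable gq_summable)
  then show "(\<Sum>i. ct w (i + n)) \<le> (1/3)^n" using gq_tail by simp
qed

lemma phi_split: "phi w = (\<Sum>i<n. ct w i) + (\<Sum>i. ct w (i + n))"
  unfolding phi_def using suminf_split_initial_segment[OF ct_summable, of w n] by simp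

lemma phi_bounds: "0 \<le> phi w" "phi w \<le> 1"
  using phi_split[of w 0] tail_bounds[of w 0] by auto

lemma phi_agree:
  assumes "\<forall>i<n. w i = w' i"
  shows "\<bar>phi w - phi w'\<bar> \<le> (1/3)^n"
proof -
  have "(\<Sum>i<n. ct w i) = (\<Sum>i<n. ct w' i)"
    using assms by (intro sum.cong) (auto simp: ct_def)
  then show ?thesis
    using phi_split[of w n] phi_split[of w' n] tail_bounds[of w n] tail_bounds[of w' n]
    by (simp add: abs_le_iff)
qed

lemma phi_sep:
  assumes "\<forall>j<i. w j = w' j" "w i \<noteq> w' i"
  shows "(1/3)^Suc i \<le> \<bar>phi w - phi w'\<bar>"
proof -
  have s: "(\<Sum>j<i. ct w j) = (\<Sum>j<i. ct w' j)"
    using assms by (intro sum.cong) (auto simp: ct_def)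
  have A: "phi w = (\<Sum>j<i. ct w j) + ct w i + (\<Sum>j. ct w (j + Suc i))"
    using phi_split[of w "Suc i"] by simp
  have B: "phi w' = (\<Sum>j<i. ct w' j) + ct w' i + (\<Sum>j. ct w' (j + Suc i))"
    using phi_split[of w' "Suc i"] by simp
  have d: "\<bar>ct w i - ct w' i\<bar> = 2 * (1/3)^Suc i" using assms(2) by (auto simp: ct_def)
  show ?thesis
    using A B s d tail_bounds[of w "Suc i"] tail_bounds[of w' "Suc i"]
    by (simp add: abs_if split: if_splits) linarith?
qed

lemma phi_close:
  assumes "\<bar>phi w - phi w'\<bar> < (1/3)^n"
  shows "\<forall>i<n. w i = w' i"
proof (rule ccontr)
  assume "\<not> (\<forall>i<n. w i = w' i)"
  then have ex: "\<exists>i. w i \<noteq> w' i \<and> i < n" by blast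
  define i where "i = (LEAST i. w i \<noteq> w' i \<and> i < n)"
  have i1: "w i \<noteq> w' i \<and> i < n" unfolding i_def by (rule LeastI_ex[OF ex])
  have i2: "\<forall>j<i. w j = w' j"
  proof (intro allI impI)
    fix j assume "j < i"
    then have "\<not> (w j \<noteq> w' j \<and> j < n)" unfolding i_def by (rule not_less_Least)
    then show "w j = w' j" using \<open>j < i\<close> i1 by auto
  qed
  have "(1/3::real)^Suc i \<le> \<bar>phi w - phi w'\<bar>" using phi_sep i1 i2 by blast
  moreover have "(1/3::real)^n \<le> (1/3)^Suc i"
    using i1 by (intro power_decreasing) auto
  ultimately show False using assms by linarith
qed

lemma phi_inj: "phi w = phi w' \<Longrightarrow> w = w'"
proof (rule ccontr)
  assume "phi w = phi w'" "w \<noteq> w'"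
  then obtain i where "w i \<noteq> w' i" by blast
  then have "\<not> (\<forall>j<Suc i. w j = w' j)" by auto
  then have "\<not> \<bar>phi w - phi w'\<bar> < (1/3)^Suc i" using phi_close by blast
  then show False using \<open>phi w = phi w'\<close> by simp
qed

lemma compact_bits: "compact (UNIV :: bits set)"
proof -
  have "compact_space (euclidean :: bool topology)"
    by (simp add: compact_space_def compactin_euclidean_iff finite_imp_compact)
  then have "compact_space (product_topology (\<lambda>i::nat. euclidean :: bool topology) UNIV)"
    by (simp add: compact_space_product_topology)
  then have "compact_space (euclidean :: bits topology)"
    by (simp add: euclidean_product_topology)
  then show ?thesis by (simp add: compact_space_def compactin_euclidean_iff)
qed

lemma phi_cont: "continuous_on UNIV phi"
  unfolding continuous_on_topological
proof (intro ballI allI impI)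
  fix w :: bits and B :: "real set"
  assume "open B" "phi w \<in> B"
  then obtain e where e: "e > 0" "ball (phi w) e \<subseteq> B"
    using open_contains_ball by blast
  obtain n where n: "(1/3::real)^n < e" using real_arch_pow_inv[OF e(1), of "1/3"] by auto
  let ?A = "{v :: bits. \<forall>i\<in>{..<n}. v (id i) \<in> {w i}}"
  have "open ?A" by (rule product_topology_basis') (auto simp: open_discrete)
  moreover have "w \<in> ?A" by simp
  moreover have "\<forall>v\<in>UNIV. v \<in> ?A \<longrightarrow> phi v \<in> B"
  proof (intro ballI impI)
    fix v assume "v \<in> ?A"
    then have "\<forall>i<n. v i = w i" by auto
    then have "\<bar>phi v - phi w\<bar> \<le> (1/3)^n" by (rule phi_agree)
    then have "phi v \<in> ball (phi w) e" using n by (simp add: dist_real_def)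
    then show "phi v \<in> B" using e by blast
  qed
  ultimately show "\<exists>A. open A \<and> w \<in> A \<and> (\<forall>v\<in>UNIV. v \<in> A \<longrightarrow> phi v \<in> B)" by blast
qed

lemma compact_K: "compact (range phi)"
  by (rule compact_continuous_image[OF phi_cont compact_bits])



definition e :: "nat \<Rightarrow> nat" where "e a = (if a = 0 then 0 else 2^(a-1))"

lemma e_lt: "e a < 2^a"
  by (cases a) (auto simp: e_def)

definition beta :: "nat \<Rightarrow> nat \<Rightarrow> real" where
  "beta a c = real ((c + 2^a - e a - 1) mod 2^a) / 2^a"

definition N :: "nat \<Rightarrow> bits \<Rightarrow> real" where
  "N a w = real a + beta a (val a w)"

lemma beta_bounds: "0 \<le> beta a c" "beta a c < 1"
proof -
  show "0 \<le> beta a c" by (simp add: beta_def)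
  have "(c + 2^a - e a - 1) mod 2^a < (2::nat)^a" by simp
  then have "real ((c + 2^a - e a - 1) mod 2^a) < 2^a"
    by (metis of_nat_less_iff of_nat_numeral of_nat_power)
  then show "beta a c < 1" by (simp add: beta_def)
qed

lemma N_bounds: "real a \<le> N a w" "N a w < real a + 1"
  using beta_bounds[of a "val a w"] by (auto simp: N_def)

lemma N_mono_strict: "a < b \<Longrightarrow> N a w < N b w'"
proof -
  assume "a < b"
  then have "real a + 1 \<le> real b" by simp
  then show ?thesis using N_bounds[of a w] N_bounds[of b w'] by linarith
qed

lemma N_mono: "a \<le> b \<Longrightarrow> (\<forall>i<a. w i = w' i) \<Longrightarrow> N a w \<le> N b w'"
proof -
  assume "a \<le> b" "\<forall>i<a. w i = w' i"
  show ?thesis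
  proof (cases "a = b")
    case True
    have "val a w = val a w'" using \<open>\<forall>i<a. w i = w' i\<close> by (rule val_eq)
    then show ?thesis using True by (simp add: N_def)
  next
    case False then show ?thesis using \<open>a \<le> b\<close> N_mono_strict by (simp add: less_eq_real_def)
  qed
qed

lemma N_agree: "(\<forall>i<a. w i = w' i) \<Longrightarrow> N a w = N a w'"
proof -
  assume "\<forall>i<a. w i = w' i"
  then have "val a w = val a w'" by (rule val_eq)
  then show ?thesis by (simp add: N_def)
qed

lemma mod_key0:
  fixes v e M :: nat
  assumes "v < M" "e < M" "(v + M - e) mod M = 0"
  shows "v = e"
proof -
  have "0 < v + M - e" using assms by simp
  moreover have "v + M - e < 2 * M" using assms by simp
  moreover obtain t where t: "v + M - e = M * t" using assms(3) by (auto elim!: dvdE)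
  ultimately have "0 < M * t" "M * t < M * 2" by simp_all
  then have "t < 2" "t \<noteq> 0" by simp_all
  then have "t = 1" by arith
  then have "v + M - e = M" using t by simp
  then show ?thesis using assms by simp
qed

lemma mod_key:
  fixes v e M r :: nat
  assumes "v < M" "e < M" "r < M" "(v + r + M - e) mod M = r"
  shows "v = e"
proof -
  define x where "x = v + M - e"
  have xr: "v + r + M - e = x + r" using assms by (simp add: x_def)
  define y where "y = x mod M"
  have "(y + r) mod M = r" using assms(4) xr by (simp add: y_def mod_add_left_eq)
  moreover have "y < M" using assms by (simp add: y_def)
  ultimately have "y = 0"
  proof -
    assume h: "(y + r) mod M = r" "y < M"
    show "y = 0"
    proof (cases "y + r < M")
      case True then show ?thesis using h by simp
    next
      case False
      have lt: "y + r - M < M" using h(2) assms(3) by linarith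
      have "(y + r) mod M = (y + r - M) mod M" using False by (simp add: le_mod_geq)
      also have "\<dots> = y + r - M" using lt by simp
      finally have "y + r - M = r" using h(1) by simp
      then show ?thesis using h(2) False by linarith
    qed
  qed
  then show ?thesis using mod_key0[OF assms(1,2)] by (simp add: y_def x_def)
qed

lemma N_add1:
  assumes "val a w \<noteq> e a"
  shows "N a w < N a (add1 w)"
proof -
  define M :: nat where "M = 2^a"
  define v where "v = val a w"
  have vM: "v < M" by (simp add: v_def M_def val_lt)
  have eM: "e a < M" by (simp add: M_def e_lt)
  define X where "X = v + M - e a - 1"
  have ne: "X mod M \<noteq> M - 1"
  proof
    assume h: "X mod M = M - 1"
    have sx: "Suc X = v + M - e a" using vM eM unfolding X_def by arith
    have "(v + M - e a) mod M = Suc X mod M" by (simp only: sx)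
    also have "\<dots> = 0" using h vM by (simp add: mod_Suc)
    finally have "v = e a" by (rule mod_key0[OF vM eM])
    then show False using assms by (simp add: v_def)
  qed
  have Mpos: "0 < M" by (simp add: M_def)
  have "X mod M < M" using Mpos by simp
  then have lt: "X mod M + 1 < M" using ne by linarith
  have va: "val a (add1 w) = (v + 1) mod M" by (simp add: val_add1 v_def M_def)
  have "((v + 1) mod M + M - e a - 1) mod M = (v + 1 + M - e a - 1) mod M"
  proof -
    have "((v + 1) mod M + (M - e a - 1)) mod M = (v + 1 + (M - e a - 1)) mod M"
      by (simp add: mod_add_left_eq)
    moreover have "(v + 1) mod M + M - e a - 1 = (v + 1) mod M + (M - e a - 1)" using eM by simp
    moreover have "v + 1 + M - e a - 1 = v + 1 + (M - e a - 1)" using eM by simp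
    ultimately show ?thesis by simp
  qed
  also have "\<dots> = Suc X mod M"
  proof -
    have "v + 1 + M - e a - 1 = Suc X" using eM unfolding X_def by arith
    then show ?thesis by simp
  qed
  also have "\<dots> = X mod M + 1" using lt by (simp add: mod_Suc)
  finally have q: "((v + 1) mod M + M - e a - 1) mod M = X mod M + 1" .
  have b1: "beta a (val a w) = real (X mod M) / M"
    by (simp add: beta_def X_def v_def M_def)
  have b2: "beta a (val a (add1 w)) = real (X mod M + 1) / M"
    using q va by (simp add: beta_def M_def)
  show ?thesis using b1 b2 Mpos by (simp add: N_def divide_strict_right_mono)
qed

lemma badfree: "\<exists>K\<ge>1. \<forall>a\<ge>K. val a z \<noteq> e a"
proof (cases "\<exists>a\<ge>1. val a z = e a")
  case False
  then show ?thesis by auto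
next
  case True
  then obtain a0 where a0: "a0 \<ge> 1" "val a0 z = e a0" by blast
  have "\<forall>b\<ge>Suc a0. val b z \<noteq> e b"
  proof (intro allI impI notI)
    fix b assume b: "b \<ge> Suc a0" "val b z = e b"
    have "val a0 z = val b z mod 2^a0" using b by (intro val_mod) simp
    also have "\<dots> = 2^(b-1) mod 2^a0" using b by (simp add: e_def)
    also have "\<dots> = 0"
    proof -
      have "(2::nat)^a0 dvd 2^(b-1)" using b by (intro le_imp_power_dvd) simp
      then show ?thesis by simp
    qed
    finally have "val a0 z = 0" .
    then show False using a0 by (simp add: e_def)
  qed
  then show ?thesis by (intro exI[of _ "Suc a0"]) auto
qed

definition Lg :: "nat \<Rightarrow> nat" where "Lg k = floor_log (Suc k)"

definition lam :: "nat \<Rightarrow> bits \<Rightarrow> nat" where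
  "lam k w = (if (val (Lg k) w + (Suc k - 2^Lg k) + 2^Lg k - e (Lg k)) mod 2^Lg k \<le> Suc k - 2^Lg k
              then Lg k else Lg k - 1)"

lemma Lg_bounds: "2^Lg k \<le> Suc k" "Suc k < 2 * 2^Lg k"
  unfolding Lg_def by (simp_all add: floor_log_exp2_le floor_log_exp2_gt)

lemma lam_0: "lam 0 w = 0"
  by (simp add: lam_def Lg_def)

lemma lam_le: "lam k w \<le> Lg k" "Lg k \<le> lam k w + 1"
  by (auto simp: lam_def)

lemma lam_agree: "(\<forall>i<Lg k. w i = w' i) \<Longrightarrow> lam k w = lam k w'"
  using val_eq[of "Lg k" w w'] by (simp add: lam_def)

lemma Lg_mono: "k \<le> k' \<Longrightarrow> Lg k \<le> Lg k'"
  unfolding Lg_def by (intro floor_log_le_iff) simp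

lemma lam_step:
  "lam k (add1 w) \<le> lam (Suc k) w \<and> lam (Suc k) w \<le> lam k (add1 w) + 1 \<and>
   (lam k (add1 w) < lam (Suc k) w \<longrightarrow> val (lam (Suc k) w) w = e (lam (Suc k) w))"
proof -
  define m where "m = Suc (Suc k)"
  define L where "L = Lg (Suc k)"
  define M :: nat where "M = 2^L"
  have mL1: "M \<le> m" "m < 2 * M" using Lg_bounds[of "Suc k"] by (simp_all add: m_def L_def M_def)
  define r where "r = m - M"
  have rM: "r < M" using mL1 by (simp add: r_def)
  define v where "v = val L w"
  have vM: "v < M" by (simp add: v_def M_def val_lt)
  have eM: "e L < M" by (simp add: M_def e_lt)
  define q where "q = (v + r + M - e L) mod M"
  have lamS: "lam (Suc k) w = (if q \<le> r then L else L - 1)"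
    by (simp add: lam_def q_def v_def r_def m_def M_def L_def)
  show ?thesis
  proof (cases "r \<ge> 1")
    case True
    have LL: "Lg k = L"
    proof -
      have "floor_log (Suc k) = L"
        using mL1 True by (intro floor_log_eqI) (auto simp: r_def m_def M_def)
      then show ?thesis by (simp add: Lg_def)
    qed
    have r': "Suc k - 2^Lg k = r - 1" using LL by (simp add: r_def m_def M_def)
    have va: "val L (add1 w) = (v + 1) mod M" by (simp add: val_add1 v_def M_def)
    have "((v + 1) mod M + (r - 1) + M - e L) mod M = q"
    proof -
      define c where "c = (v + 1) mod M"
      have h1: "(c + (r - 1 + M - e L)) mod M = (v + 1 + (r - 1 + M - e L)) mod M"
        unfolding c_def by (simp add: mod_add_left_eq)
      have h2: "c + (r - 1) + M - e L = c + (r - 1 + M - e L)"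
        using eM by arith
      have h3: "v + 1 + (r - 1 + M - e L) = v + r + M - e L" using eM True by arith
      have "((v + 1) mod M + (r - 1) + M - e L) mod M = (c + (r - 1 + M - e L)) mod M"
        using h2 by (simp only: c_def)
      also have "\<dots> = (v + 1 + (r - 1 + M - e L)) mod M" by (rule h1)
      also have "\<dots> = q" by (simp only: h3 q_def)
      finally show ?thesis .
    qed
    then have lamk: "lam k (add1 w) = (if q \<le> r - 1 then L else L - 1)"
      using LL r' va by (simp add: lam_def M_def)
    have imp: "\<not> q \<le> r - 1 \<Longrightarrow> q \<le> r \<Longrightarrow> v = e L"
    proof -
      assume "\<not> q \<le> r - 1" "q \<le> r"
      then have "q = r" by linarith
      then show "v = e L" using mod_key[OF vM eM rM] by (simp add: q_def)
    qed
    show ?thesis using lamS lamk imp by (auto simp: v_def)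
  next
    case False
    then have r0: "r = 0" by simp
    then have mM: "m = M" using mL1 by (simp add: r_def)
    have L1: "L \<ge> 1"
    proof (rule ccontr)
      assume "\<not> L \<ge> 1"
      then have "M = 1" by (simp add: M_def)
      then show False using mM by (simp add: m_def)
    qed
    have LL: "Lg k = L - 1"
    proof -
      have M2: "M = 2 * 2^(L-1)" using L1 by (simp add: M_def power_eq_if)
      have "floor_log (Suc k) = L - 1"
        using M2 mM by (intro floor_log_eqI) (auto simp: m_def)
      then show ?thesis by (simp add: Lg_def)
    qed
    have M2: "M = 2 * 2^(L-1)" using L1 by (simp add: M_def power_eq_if)
    have r': "Suc k - 2^Lg k = 2^(L-1) - 1" using LL mM M2 by (simp add: m_def)
    have lamk: "lam k (add1 w) = L - 1"
    proof -
      have "(val (Lg k) (add1 w) + (Suc k - 2^Lg k) + 2^Lg k - e (Lg k)) mod 2^Lg k \<le> Suc k - 2^Lg k"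
        using r' LL by (simp add: less_Suc_eq_le[symmetric])
      then show ?thesis using LL by (simp add: lam_def)
    qed
    have imp: "q \<le> r \<Longrightarrow> v = e L"
    proof -
      assume "q \<le> r"
      then have "(v + M - e L) mod M = 0" using r0 by (simp add: q_def)
      then show "v = e L" by (rule mod_key0[OF vM eM])
    qed
    show ?thesis using lamS lamk imp by (auto simp: v_def)
  qed
qed



datatype pt = P | Mp bits | Sa nat bits | Sb nat bits

fun Gs :: "pt \<Rightarrow> pt" where
  "Gs P = P"
| "Gs (Mp z) = Mp (add1 z)"
| "Gs (Sa (Suc k) w) = Sa k (add1 w)"
| "Gs (Sa 0 w) = Sb 0 (add1 w)"
| "Gs (Sb j w) = Sb (Suc j) (add1 w)"

fun Gi :: "pt \<Rightarrow> pt" where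
  "Gi P = P"
| "Gi (Mp z) = Mp (sub1 z)"
| "Gi (Sa k w) = Sa (Suc k) (sub1 w)"
| "Gi (Sb 0 w) = Sa 0 (sub1 w)"
| "Gi (Sb (Suc j) w) = Sb j (sub1 w)"

lemma Gs_Gi [simp]: "Gs (Gi x) = x"
  by (induction x rule: Gi.induct) auto

lemma Gi_Gs [simp]: "Gi (Gs x) = x"
  by (induction x rule: Gs.induct) auto

lemma Gs_inj: "Gs x = Gs y \<Longrightarrow> x = y"
  by (metis Gi_Gs)

fun isM :: "pt \<Rightarrow> bool" where
  "isM (Mp _) = True" | "isM (Sa _ _) = True" | "isM _ = False"

fun isPs :: "pt \<Rightarrow> bool" where
  "isPs P = True" | "isPs (Sb _ _) = True" | "isPs _ = False"

fun code :: "pt \<Rightarrow> bits" where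
  "code (Mp z) = z" | "code (Sa k w) = w" | "code (Sb j w) = w" | "code P = (\<lambda>_. False)"

fun cap :: "pt \<Rightarrow> nat option" where
  "cap (Sa k w) = Some (lam k w)" | "cap _ = None"

fun idx :: "pt \<Rightarrow> nat" where
  "idx (Sa k w) = k" | "idx (Sb j w) = j" | "idx _ = 0"

definition mcond :: "pt \<Rightarrow> pt \<Rightarrow> nat \<Rightarrow> bool" where
  "mcond x y i \<longleftrightarrow> cap x = Some i \<or> cap y = Some i \<or> code x i \<noteq> code y i"

definition meet :: "pt \<Rightarrow> pt \<Rightarrow> nat" where
  "meet x y = (LEAST i. mcond x y i)"

definition agr :: "bits \<Rightarrow> bits \<Rightarrow> nat" where
  "agr w w' = (LEAST i. w i \<noteq> w' i)"

fun sp :: "pt \<Rightarrow> pt \<Rightarrow> bool" where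
  "sp (Sa k w) (Sa k' w') = (k = k' \<and> (\<forall>i<Lg k. w i = w' i))"
| "sp _ _ = False"

definition lvM :: "pt \<Rightarrow> pt \<Rightarrow> real" where
  "lvM x y = (if sp x y then N (agr (code x) (code y)) (code x) + 1 / real (Suc (idx x))
              else N (meet x y) (code x))"

fun lvP :: "pt \<Rightarrow> pt \<Rightarrow> real" where
  "lvP P (Sb j w) = 1 + real j"
| "lvP (Sb j w) P = 1 + real j"
| "lvP (Sb j w) (Sb j' w') = (if j = j' then real (agr w w') + 2 + real j else 1 + real (min j j'))"
| "lvP _ _ = 0"

definition lv :: "pt \<Rightarrow> pt \<Rightarrow> real" where
  "lv x y = (if isM x \<and> isM y then lvM x y else if isPs x \<and> isPs y then lvP x y else 0)"

definition ds :: "pt \<Rightarrow> pt \<Rightarrow> real" where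
  "ds x y = (if x = y then 0 else 1 / (1 + lv x y))"

lemma mcond_sym: "mcond x y i = mcond y x i"
  unfolding mcond_def by auto

lemma meet_sym: "meet x y = meet y x"
proof -
  have "mcond x y = mcond y x" by (rule ext) (rule mcond_sym)
  then show ?thesis unfolding meet_def by simp
qed

lemma meet_below: "i < meet x y \<Longrightarrow> \<not> mcond x y i"
  unfolding meet_def by (rule not_less_Least)

lemma meet_below': "i < meet x y \<Longrightarrow> code x i = code y i \<and> cap x \<noteq> Some i \<and> cap y \<noteq> Some i"
  using meet_below unfolding mcond_def by blast

lemma meet_le: "mcond x y i \<Longrightarrow> meet x y \<le> i"
  unfolding meet_def by (rule Least_le)

lemma meet_cond: "mcond x y i \<Longrightarrow> mcond x y (meet x y)"
  unfolding meet_def by (rule LeastI)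

lemma meet_cap: "cap x = Some l \<Longrightarrow> meet x y \<le> l"
  by (rule meet_le) (simp add: mcond_def)

lemma meet_agree: "\<forall>i<meet x y. code x i = code y i"
  using meet_below' by blast

lemma ex_M: "isM x \<Longrightarrow> isM y \<Longrightarrow> x \<noteq> y \<Longrightarrow> \<exists>i. mcond x y i"
proof -
  assume a: "isM x" "isM y" "x \<noteq> y"
  show ?thesis
  proof (cases "cap x = None \<and> cap y = None")
    case True
    then obtain z z' where "x = Mp z" "y = Mp z'" using a
      by (cases x; cases y) auto
    then have "z \<noteq> z'" using a by auto
    then obtain i where "z i \<noteq> z' i" by blast
    then show ?thesis using \<open>x = Mp z\<close> \<open>y = Mp z'\<close> by (auto simp: mcond_def)
  next
    case False
    then show ?thesis by (auto simp: mcond_def)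
  qed
qed

lemma meet_ultra:
  assumes "\<exists>i. mcond x z i"
  shows "min (meet x y) (meet y z) \<le> meet x z"
proof (rule ccontr)
  assume "\<not> ?thesis"
  then have l1: "meet x z < meet x y" and l2: "meet x z < meet y z" by auto
  have "mcond x z (meet x z)" using assms meet_cond by blast
  moreover have "\<not> mcond x y (meet x z)" using l1 by (rule meet_below)
  moreover have "\<not> mcond y z (meet x z)" using l2 by (rule meet_below)
  ultimately show False unfolding mcond_def by auto
qed

lemma meet_shift:
  assumes ex: "\<exists>i. mcond x y i"
    and c: "code x' = add1 (code x)" "code y' = add1 (code y)"
    and b: "\<forall>i<meet x y. cap x' \<noteq> Some i \<and> cap y' \<noteq> Some i"
    and t: "cap x' = Some (meet x y) \<or> cap y' = Some (meet x y) \<or> code x (meet x y) \<noteq> code y (meet x y)"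
  shows "meet x' y' = meet x y"
proof (rule antisym)
  have ag: "\<forall>j<meet x y. code x j = code y j" by (rule meet_agree)
  show "meet x' y' \<le> meet x y"
  proof (rule meet_le)
    show "mcond x' y' (meet x y)"
      using t add1_agree[OF ag] c unfolding mcond_def by auto
  qed
  show "meet x y \<le> meet x' y'"
  proof (rule ccontr)
    assume "\<not> meet x y \<le> meet x' y'"
    then have lt: "meet x' y' < meet x y" by simp
    have "mcond x' y' (meet x' y')"
      using meet_cond[of x' y' "meet x y"] t add1_agree[OF ag] c unfolding mcond_def by auto
    moreover have "code x (meet x' y') = code y (meet x' y')" using ag lt by blast
    moreover have "\<forall>j<meet x' y'. code x j = code y j" using ag lt by auto
    ultimately show False using b lt c add1_agree unfolding mcond_def by metis
  qed
qed

lemma agr_below: "i < agr w w' \<Longrightarrow> w i = w' i"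
  unfolding agr_def using not_less_Least by blast

lemma agr_diff: "w \<noteq> w' \<Longrightarrow> w (agr w w') \<noteq> w' (agr w w')"
  unfolding agr_def by (rule LeastI_ex) blast

lemma agr_ge: "(\<forall>i<n. w i = w' i) \<Longrightarrow> w \<noteq> w' \<Longrightarrow> n \<le> agr w w'"
  using agr_diff not_less by blast

lemma agr_sym: "agr w w' = agr w' w"
  unfolding agr_def by (simp add: eq_commute)

lemma agr_ultra: "w \<noteq> w'' \<Longrightarrow> min (agr w w') (agr w' w'') \<le> agr w w''"
  using agr_diff[of w w''] agr_below[of _ w w'] agr_below[of _ w' w''] not_less by fastforce

lemma agr_shift: "w \<noteq> w' \<Longrightarrow> agr (add1 w) (add1 w') = agr w w'"
proof -
  assume ne: "w \<noteq> w'"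
  have ag: "\<forall>j<agr w w'. w j = w' j" using agr_below by blast
  have d: "add1 w (agr w w') \<noteq> add1 w' (agr w w')"
    using add1_agree[OF ag] agr_diff[OF ne] by simp
  have "\<forall>j<agr w w'. add1 w j = add1 w' j" using add1_agree_below[OF ag] .
  then show ?thesis using d unfolding agr_def
    by (intro Least_equality) (auto simp: not_less[symmetric])
qed

lemma sp_cases: "sp x y \<Longrightarrow> \<exists>k w w'. x = Sa k w \<and> y = Sa k w' \<and> (\<forall>i<Lg k. w i = w' i)"
  by (cases x; cases y) auto

lemma sp_sym: "sp x y \<Longrightarrow> sp y x"
  by (cases x; cases y) auto

lemma sp_trans: "sp x y \<Longrightarrow> sp y z \<Longrightarrow> sp x z"
  by (cases x; cases y; cases z) auto

lemma sp_cap: "sp x y \<Longrightarrow> cap x = cap y"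
  using lam_agree by (cases x; cases y) auto

lemma sp_meet: "sp x y \<Longrightarrow> cap x = Some (meet x y)"
proof -
  assume s: "sp x y"
  then obtain k w w' where kw: "x = Sa k w" "y = Sa k w'" "\<forall>i<Lg k. w i = w' i"
    using sp_cases by blast
  have cy: "cap y = Some (lam k w)" using sp_cap[OF s] kw by simp
  have "meet x y \<le> lam k w" using kw by (intro meet_cap) simp
  moreover have "lam k w \<le> meet x y"
  proof (rule ccontr)
    assume "\<not> lam k w \<le> meet x y"
    then have lt: "meet x y < lam k w" by simp
    have "mcond x y (meet x y)" by (rule meet_cond[of _ _ "lam k w"]) (simp add: mcond_def kw)
    moreover have "meet x y < Lg k" using lt lam_le[of k w] by linarith
    ultimately show False using kw cy lt by (auto simp: mcond_def)
  qed
  ultimately show ?thesis using kw by simp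
qed

lemma sp_agr: "sp x y \<Longrightarrow> x \<noteq> y \<Longrightarrow> Lg (idx x) \<le> agr (code x) (code y) \<and> idx y = idx x"
proof -
  assume s: "sp x y" "x \<noteq> y"
  then obtain k w w' where kw: "x = Sa k w" "y = Sa k w'" "\<forall>i<Lg k. w i = w' i"
    using sp_cases by blast
  then show ?thesis using s by (auto intro: agr_ge)
qed

lemma N_nonneg: "0 \<le> N a w"
  using N_bounds(1)[of a w] by linarith

lemma lvM_nonneg: "0 \<le> lvM x y"
  unfolding lvM_def using N_nonneg by (auto intro: add_nonneg_nonneg)

lemma lv_nonneg: "0 \<le> lv x y"
proof -
  have "0 \<le> lvP x y" by (induction x y rule: lvP.induct) auto
  then show ?thesis using lvM_nonneg by (simp add: lv_def)
qed

lemma lvM_sym: "x \<noteq> y \<Longrightarrow> lvM x y = lvM y x"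
proof -
  assume ne: "x \<noteq> y"
  show ?thesis
  proof (cases "sp x y")
    case True
    then have s2: "sp y x" by (rule sp_sym)
    obtain k w w' where kw: "x = Sa k w" "y = Sa k w'" using True sp_cases by blast
    have "N (agr w w') w = N (agr w w') w'" using agr_below by (intro N_agree) blast
    then show ?thesis using True s2 kw by (simp add: lvM_def agr_sym)
  next
    case False
    then have s2: "\<not> sp y x" using sp_sym by blast
    have "N (meet x y) (code x) = N (meet x y) (code y)" using meet_agree by (intro N_agree) blast
    then show ?thesis using False s2 by (simp add: lvM_def meet_sym)
  qed
qed

lemma lvP_sym: "lvP x y = lvP y x"
  by (induction x y rule: lvP.induct) (auto simp: agr_sym min.commute)

lemma lv_sym: "x \<noteq> y \<Longrightarrow> lv x y = lv y x"
  using lvM_sym lvP_sym by (auto simp: lv_def)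

lemma lvM_nsp_le: "\<not> sp x y \<Longrightarrow> cap x = Some l \<Longrightarrow> lvM x y \<le> N l (code x)"
  unfolding lvM_def using meet_cap N_mono by auto

lemma lvM_sp_gt: "sp x y \<Longrightarrow> x \<noteq> y \<Longrightarrow> cap x = Some l \<Longrightarrow> N l (code x) < lvM x y"
proof -
  assume s: "sp x y" "x \<noteq> y" "cap x = Some l"
  then obtain k w w' where kw: "x = Sa k w" "y = Sa k w'" using sp_cases by blast
  have "l \<le> Lg k" using s kw lam_le by auto
  also have "Lg k \<le> agr w w'" using sp_agr[OF s(1,2)] kw by simp
  finally have "N l w \<le> N (agr w w') w" by (intro N_mono) auto
  moreover have "0 < 1 / (1 + real k)" by simp
  moreover have "lvM x y = N (agr w w') w + 1 / (1 + real k)" using s kw by (simp add: lvM_def)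
  ultimately show ?thesis unfolding kw code.simps by linarith
qed

subsection \<open>Ultrametric inequality\<close>

lemma lvM_ultra:
  assumes M: "isM x" "isM y" "isM z" and d: "x \<noteq> y" "y \<noteq> z" "x \<noteq> z"
  shows "min (lvM x y) (lvM y z) \<le> lvM x z"
proof -
  have exxz: "\<exists>i. mcond x z i" using ex_M M d by blast
  have mu: "min (meet x y) (meet y z) \<le> meet x z" using meet_ultra[OF exxz] .
  have agxy: "\<forall>i<meet x y. code x i = code y i" by (rule meet_agree)
  have agyz: "\<forall>i<meet y z. code y i = code z i" by (rule meet_agree)
  consider (a) "sp x y" "sp y z" | (b) "sp x y" "\<not> sp y z" | (c) "\<not> sp x y" "sp y z"
    | (d) "\<not> sp x y" "\<not> sp y z" "sp x z" | (e) "\<not> sp x y" "\<not> sp y z" "\<not> sp x z" by blast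
  then show ?thesis
  proof cases
    case a
    then have sxz: "sp x z" by (rule sp_trans)
    obtain k w w' where kw: "x = Sa k w" "y = Sa k w'" using sp_cases[OF a(1)] by blast
    obtain k2 v v'' where kv: "y = Sa k2 v" "z = Sa k2 v''" using sp_cases[OF a(2)] by blast
    have "k2 = k" "v = w'" using kv kw by auto
    then have kw2: "z = Sa k v''" using kv by simp
    define w'' where "w'' = v''"
    have kw2: "z = Sa k w''" using kw2 by (simp add: w''_def)
    have ne: "w \<noteq> w''" "w \<noteq> w'" "w' \<noteq> w''" using d kw kw2 by auto
    have u: "min (agr w w') (agr w' w'') \<le> agr w w''" by (rule agr_ultra[OF ne(1)])
    have "min (N (agr w w') w) (N (agr w' w'') w') \<le> N (agr w w'') w"
    proof (cases "agr w w' \<le> agr w' w''")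
      case True
      then have "N (agr w w') w \<le> N (agr w w'') w" using u by (intro N_mono) auto
      then show ?thesis by simp
    next
      case False
      then have "agr w' w'' < agr w w'" by simp
      have "\<forall>i<agr w' w''. w' i = w i"
      proof (intro allI impI)
        fix i assume "i < agr w' w''"
        then have "i < agr w w'" using \<open>agr w' w'' < agr w w'\<close> by simp
        then show "w' i = w i" using agr_below[of i w w'] by simp
      qed
      then have "N (agr w' w'') w' = N (agr w' w'') w" by (rule N_agree)
      also have "\<dots> \<le> N (agr w w'') w" using u False by (intro N_mono) auto
      finally show ?thesis by simp
    qed
    then show ?thesis using a sxz kw kw2 by (simp add: lvM_def)
  next
    case b
    then have nxz: "\<not> sp x z" using sp_trans sp_sym by blast
    obtain k w w' where kw: "x = Sa k w" "y = Sa k w'" using sp_cases[OF b(1)] by blast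
    define l where "l = lam k w"
    have cx: "cap x = Some l" "cap y = Some l" using sp_cap[OF b(1)] kw by (simp_all add: l_def)
    have mxy: "meet x y = l" using sp_meet[OF b(1)] cx by simp
    have myz: "meet y z \<le> l" using cx by (intro meet_cap) simp
    have m: "meet y z \<le> meet x z" using mu mxy myz by linarith
    have "\<forall>i<meet y z. code y i = code x i" using agxy mxy myz by auto
    then have "N (meet y z) (code y) = N (meet y z) (code x)" by (rule N_agree)
    also have "\<dots> \<le> N (meet x z) (code x)" using m by (intro N_mono) auto
    finally show ?thesis using b nxz by (simp add: lvM_def)
  next
    case c
    then have nxz: "\<not> sp x z" using sp_trans sp_sym by blast
    obtain k w w' where kw: "y = Sa k w" "z = Sa k w'" using sp_cases[OF c(2)] by blast
    define l where "l = lam k w"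
    have cy: "cap y = Some l" "cap z = Some l" using sp_cap[OF c(2)] kw by (simp_all add: l_def)
    have myz: "meet y z = l" using sp_meet[OF c(2)] cy by simp
    have mxy: "meet x y \<le> l" using meet_cap[OF cy(1), of x] by (simp add: meet_sym)
    have m: "meet x y \<le> meet x z" using mu mxy myz by linarith
    have "N (meet x y) (code x) \<le> N (meet x z) (code x)" using m by (intro N_mono) auto
    then show ?thesis using c nxz by (simp add: lvM_def)
  next
    case d
    obtain k w w' where kw: "x = Sa k w" "z = Sa k w'" using sp_cases[OF d(3)] by blast
    define l where "l = lam k w"
    have cx: "cap x = Some l" using kw by (simp add: l_def)
    have "lvM x y \<le> N l (code x)" by (rule lvM_nsp_le[OF d(1) cx])
    also have "\<dots> < lvM x z" by (rule lvM_sp_gt[OF d(3) \<open>x \<noteq> z\<close> cx])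
    finally show ?thesis by simp
  next
    case e
    have "min (N (meet x y) (code x)) (N (meet y z) (code y)) \<le> N (meet x z) (code x)"
    proof (cases "meet x y \<le> meet y z")
      case True
      then have "N (meet x y) (code x) \<le> N (meet x z) (code x)" using mu by (intro N_mono) auto
      then show ?thesis by simp
    next
      case False
      then have "\<forall>i<meet y z. code y i = code x i" using agxy by auto
      then have "N (meet y z) (code y) = N (meet y z) (code x)" by (rule N_agree)
      also have "\<dots> \<le> N (meet x z) (code x)" using mu False by (intro N_mono) auto
      finally show ?thesis by simp
    qed
    then show ?thesis using e by (simp add: lvM_def)
  qed
qed

lemma lvP_ultra:
  assumes M: "isPs x" "isPs y" "isPs z" and d: "x \<noteq> y" "y \<noteq> z" "x \<noteq> z"
  shows "min (lvP x y) (lvP y z) \<le> lvP x z"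
proof -
  consider (1) "x = P" | (2) "y = P" | (3) "z = P" | (4) "\<exists>j w j' w' j'' w''. x = Sb j w \<and> y = Sb j' w' \<and> z = Sb j'' w''"
    using M by (cases x; cases y; cases z) auto
  then show ?thesis
  proof cases
    case 1
    then obtain j w j' w' where "y = Sb j w" "z = Sb j' w'" using M d by (cases y; cases z) auto
    then show ?thesis using 1 by auto
  next
    case 2
    then obtain j w j' w' where "x = Sb j w" "z = Sb j' w'" using M d by (cases x; cases z) auto
    then show ?thesis using 2 by auto
  next
    case 3
    then obtain j w j' w' where "x = Sb j w" "y = Sb j' w'" using M d by (cases x; cases y) auto
    then show ?thesis using 3 by auto
  next
    case 4
    then obtain j w j' w' j'' w'' where jw: "x = Sb j w" "y = Sb j' w'" "z = Sb j'' w''" by blast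
    show ?thesis
    proof (cases "j = j' \<and> j' = j''")
      case True
      then have ne: "w \<noteq> w''" using d jw by auto
      have "min (agr w w') (agr w' w'') \<le> agr w w''" by (rule agr_ultra[OF ne])
      then show ?thesis using jw True by auto
    next
      case False
      then show ?thesis using jw by auto
    qed
  qed
qed

lemma lv_ultra:
  assumes d: "x \<noteq> y" "y \<noteq> z" "x \<noteq> z"
  shows "min (lv x y) (lv y z) \<le> lv x z"
proof -
  have side: "isM u \<or> isPs u" for u by (cases u) auto
  have nb: "\<not> (isM u \<and> isPs u)" for u by (cases u) auto
  show ?thesis
  proof (cases "isM x \<and> isM y \<and> isM z")
    case True then show ?thesis using lvM_ultra d by (simp add: lv_def)
  next
    case F1: False
    show ?thesis
    proof (cases "isPs x \<and> isPs y \<and> isPs z")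
      case True
      then have "\<not> isM x" "\<not> isM y" "\<not> isM z" using nb by auto
      then show ?thesis using lvP_ultra d True by (simp add: lv_def)
    next
      case False
      then have "lv x y = 0 \<or> lv y z = 0" using F1 side nb by (auto simp: lv_def)
      then show ?thesis using lv_nonneg[of x z] lv_nonneg[of x y] lv_nonneg[of y z] by linarith
    qed
  qed
qed

lemma ds_nonneg: "0 \<le> ds x y"
  using lv_nonneg[of x y] by (simp add: ds_def)

lemma ds_sym: "ds x y = ds y x"
  using lv_sym by (simp add: ds_def)

lemma ds_zero: "ds x y = 0 \<longleftrightarrow> x = y"
  using lv_nonneg[of x y] by (simp add: ds_def)

lemma ds_ultra: "ds x z \<le> max (ds x y) (ds y z)"
proof (cases "x = y \<or> y = z \<or> x = z")
  case True
  have a: "0 \<le> ds x y" "0 \<le> ds y z" by (rule ds_nonneg)+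
  have b: "ds x x = 0" by (simp add: ds_def)
  from True show ?thesis
  proof (elim disjE)
    assume "x = y" then show ?thesis using a by simp
  next
    assume "y = z" then show ?thesis using a by simp
  next
    assume "x = z" then show ?thesis using a b by simp
  qed
next
  case False
  then have u: "min (lv x y) (lv y z) \<le> lv x z" using lv_ultra by blast
  have p: "0 \<le> lv x y" "0 \<le> lv y z" "0 \<le> lv x z" using lv_nonneg by auto
  show ?thesis
  proof (cases "lv x y \<le> lv y z")
    case True
    then have "lv x y \<le> lv x z" using u by simp
    then have "1 / (1 + lv x z) \<le> 1 / (1 + lv x y)" using p by (intro divide_left_mono) auto
    then show ?thesis using False by (simp add: ds_def)
  next
    case F2: False
    then have "lv y z \<le> lv x z" using u by simp
    then have "1 / (1 + lv x z) \<le> 1 / (1 + lv y z)" using p by (intro divide_left_mono) auto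
    then show ?thesis using False by (simp add: ds_def)
  qed
qed

lemma ds_triangle: "ds x z \<le> ds x y + ds y z"
  using ds_ultra[of x z y] ds_nonneg[of x y] ds_nonneg[of y z] by linarith



lemma meet_cond_ex: "\<exists>i. mcond x y i \<Longrightarrow> mcond x y (meet x y)"
  using meet_cond by blast

lemma lv_P_Sb: "lv P (Sb j w) = 1 + real j" by (simp add: lv_def)

lemma lv_cases_P: "lv P y \<noteq> 0 \<Longrightarrow> \<exists>j w. y = Sb j w"
  by (cases y) (auto simp: lv_def)

lemma lrs_P: "\<exists>T\<ge>0. \<forall>y. y \<noteq> P \<longrightarrow> T < lv P y \<longrightarrow> lv P y < lv (Gs P) (Gs y)"
proof (intro exI[of _ 0] conjI allI impI)
  fix y assume "y \<noteq> P" "0 < lv P y"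
  then obtain j w where "y = Sb j w" using lv_cases_P by fastforce
  then show "lv P y < lv (Gs P) (Gs y)" by (simp add: lv_def)
qed simp

lemma lrs_Sb: "\<exists>T\<ge>0. \<forall>y. y \<noteq> Sb j w \<longrightarrow> T < lv (Sb j w) y \<longrightarrow> lv (Sb j w) y < lv (Gs (Sb j w)) (Gs y)"
proof (intro exI[of _ "1 + real j"] conjI allI impI)
  fix y assume ne: "y \<noteq> Sb j w" and gt: "1 + real j < lv (Sb j w) y"
  obtain w' where y: "y = Sb j w'"
  proof (cases y)
    case (Sb j' w')
    then show ?thesis using that gt by (cases "j = j'") (auto simp: lv_def)
  qed (use gt in \<open>auto simp: lv_def\<close>)
  then have "w \<noteq> w'" using ne by simp
  then have "agr (add1 w) (add1 w') = agr w w'" by (rule agr_shift)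
  then show "lv (Sb j w) y < lv (Gs (Sb j w)) (Gs y)" using y by (simp add: lv_def)
qed simp

lemma lrs_Sa: "\<exists>T\<ge>0. \<forall>y. y \<noteq> Sa k w \<longrightarrow> T < lv (Sa k w) y \<longrightarrow> lv (Sa k w) y < lv (Gs (Sa k w)) (Gs y)"
proof -
  obtain K where K: "K \<ge> 1" "\<forall>a\<ge>K. val a w \<noteq> e a" using badfree by blast
  define T where "T = max (N (lam k w) w) (real K + 1)"
  have T0: "0 \<le> T" unfolding T_def by simp
  show ?thesis
  proof (intro exI[of _ T] conjI allI impI T0)
    fix y assume ne: "y \<noteq> Sa k w" and gt: "T < lv (Sa k w) y"
    have yM: "isM y"
    proof (rule ccontr)
      assume "\<not> isM y"
      then have "lv (Sa k w) y = 0" by (cases y) (auto simp: lv_def)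
      then show False using gt T0 by simp
    qed
    have lvy: "lv (Sa k w) y = lvM (Sa k w) y" using yM by (simp add: lv_def)
    have s: "sp (Sa k w) y"
    proof (rule ccontr)
      assume "\<not> sp (Sa k w) y"
      then have "lvM (Sa k w) y \<le> N (lam k w) w" using lvM_nsp_le[of "Sa k w" y "lam k w"] by simp
      then show False using gt lvy by (simp add: T_def)
    qed
    then obtain w' where y: "y = Sa k w'" and ag: "\<forall>i<Lg k. w i = w' i" by (cases y) auto
    have ww: "w \<noteq> w'" using ne y by simp
    define a where "a = agr w w'"
    have aL: "Lg k \<le> a" unfolding a_def using agr_ge[OF ag ww] .
    have lvxy: "lv (Sa k w) y = N a w + 1 / real (Suc k)" using s y lvy by (simp add: lvM_def a_def)
    have aK: "K \<le> a"
    proof -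
      have "N a w < real a + 1" by (rule N_bounds(2))
      moreover have "1 / real (Suc k) \<le> 1" by simp
      moreover have "real K + 1 < lv (Sa k w) y" using gt by (simp add: T_def)
      ultimately have "real K < real a + 1" using lvxy by linarith
      then show ?thesis by simp
    qed
    have nb: "val a w \<noteq> e a" using K aK by blast
    have agr1: "agr (add1 w) (add1 w') = a" using agr_shift[OF ww] by (simp add: a_def)
    show "lv (Sa k w) y < lv (Gs (Sa k w)) (Gs y)"
    proof (cases k)
      case 0
      have "lv (Gs (Sa k w)) (Gs y) = real a + 2" using 0 y agr1 by (simp add: lv_def)
      moreover have "N a w < real a + 1" by (rule N_bounds(2))
      ultimately show ?thesis using lvxy 0 by simp
    next
      case (Suc k0)
      have ag0: "\<forall>i<Lg k0. add1 w i = add1 w' i"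
      proof -
        have "Lg k0 \<le> Lg k" using Suc by (intro Lg_mono) simp
        then have "\<forall>i<Lg k0. w i = w' i" using ag by auto
        then show ?thesis by (rule add1_agree_below)
      qed
      have sp2: "sp (Sa k0 (add1 w)) (Sa k0 (add1 w'))" using ag0 by simp
      have "lv (Gs (Sa k w)) (Gs y) = N a (add1 w) + 1 / real (Suc k0)"
        using Suc y sp2 agr1 by (simp add: lv_def lvM_def)
      moreover have "N a w < N a (add1 w)" by (rule N_add1[OF nb])
      moreover have "1 / real (Suc k) < 1 / real (Suc k0)" using Suc by (simp add: frac_less2)
      ultimately show ?thesis using lvxy by linarith
    qed
  qed
qed

lemma lrs_Mp: "\<exists>T\<ge>0. \<forall>y. y \<noteq> Mp z \<longrightarrow> T < lv (Mp z) y \<longrightarrow> lv (Mp z) y < lv (Gs (Mp z)) (Gs y)"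
proof -
  obtain K where K: "K \<ge> 1" "\<forall>a\<ge>K. val a z \<noteq> e a" using badfree by blast
  define T where "T = real K + 1"
  have T0: "0 \<le> T" unfolding T_def by simp
  show ?thesis
  proof (intro exI[of _ T] conjI allI impI T0)
    fix y assume ne: "y \<noteq> Mp z" and gt: "T < lv (Mp z) y"
    have yM: "isM y"
    proof (rule ccontr)
      assume "\<not> isM y"
      then have "lv (Mp z) y = 0" by (cases y) (auto simp: lv_def)
      then show False using gt T0 by simp
    qed
    have lvy: "lv (Mp z) y = N (meet (Mp z) y) z" using yM by (simp add: lv_def lvM_def)
    define mt where "mt = meet (Mp z) y"
    have mK: "K \<le> mt"
    proof -
      have "N mt z < real mt + 1" by (rule N_bounds(2))
      then have "real K < real mt" using gt lvy by (simp add: T_def mt_def)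
      then show ?thesis by simp
    qed
    have nb: "val mt z \<noteq> e mt" using K mK by blast
    have ex: "\<exists>i. mcond (Mp z) y i" using ex_M yM ne by auto
    have ag: "\<forall>i<mt. z i = code y i" using meet_agree[of "Mp z" y] by (simp add: mt_def)
    show "lv (Mp z) y < lv (Gs (Mp z)) (Gs y)"
    proof (cases y)
      case (Mp z')
      have "meet (Mp (add1 z)) (Mp (add1 z')) = mt" unfolding mt_def
        by (rule meet_shift[OF ex]) (use Mp meet_cond_ex[OF ex] in \<open>auto simp: mcond_def\<close>)
      then have "lv (Gs (Mp z)) (Gs y) = N mt (add1 z)" using Mp by (simp add: lv_def lvM_def)
      then show ?thesis using N_add1[OF nb] lvy by (simp add: mt_def)
    next
      case (Sa k w)
      have ml: "mt \<le> lam k w" unfolding mt_def using meet_cap[of y "lam k w" "Mp z"] Sa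
        by (simp add: meet_sym)
      have "k \<noteq> 0"
      proof
        assume "k = 0"
        then have "lam k w = 0" by (simp add: lam_0)
        then show False using ml mK K by simp
      qed
      then obtain k0 where k0: "k = Suc k0" using not0_implies_Suc by blast
      have st: "lam k0 (add1 w) \<le> lam k w \<and> lam k w \<le> lam k0 (add1 w) + 1 \<and>
        (lam k0 (add1 w) < lam k w \<longrightarrow> val (lam k w) w = e (lam k w))"
        using lam_step[of k0 w] k0 by simp
      have cm: "mcond (Mp z) y mt" unfolding mt_def by (rule meet_cond_ex[OF ex])
      have mtl: "mt \<le> lam k0 (add1 w)"
      proof (rule ccontr)
        assume "\<not> mt \<le> lam k0 (add1 w)"
        then have "lam k0 (add1 w) < mt" by simp
        then have eqm: "mt = lam k w" and bad: "val (lam k w) w = e (lam k w)" using st ml by auto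
        have "val mt z = val mt w" using ag Sa by (intro val_eq) simp
        then show False using nb bad eqm by simp
      qed
      have "meet (Mp (add1 z)) (Sa k0 (add1 w)) = mt" unfolding mt_def
      proof (rule meet_shift[OF ex])
        show "\<forall>i<meet (Mp z) y. cap (Mp (add1 z)) \<noteq> Some i \<and> cap (Sa k0 (add1 w)) \<noteq> Some i"
          using mtl by (auto simp: mt_def)
        show "cap (Mp (add1 z)) = Some (meet (Mp z) y) \<or> cap (Sa k0 (add1 w)) = Some (meet (Mp z) y) \<or>
              code (Mp z) (meet (Mp z) y) \<noteq> code y (meet (Mp z) y)"
        proof (cases "lam k0 (add1 w) = lam k w")
          case True
          then show ?thesis using cm Sa by (auto simp: mcond_def mt_def)
        next
          case False
          then have lt: "lam k0 (add1 w) < lam k w" using st by simp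
          have "mt \<noteq> lam k w" using mtl lt by simp
          then show ?thesis using cm Sa by (auto simp: mcond_def mt_def)
        qed
      qed (use Sa in auto)
      then have "lv (Gs (Mp z)) (Gs y) = N mt (add1 z)" using Sa k0 by (simp add: lv_def lvM_def)
      then show ?thesis using N_add1[OF nb] lvy by (simp add: mt_def)
    qed (use yM in auto)
  qed
qed

lemma lrs_sym: "\<exists>T\<ge>0. \<forall>y. y \<noteq> x \<longrightarrow> T < lv x y \<longrightarrow> lv x y < lv (Gs x) (Gs y)"
  using lrs_P lrs_Sb lrs_Sa lrs_Mp by (cases x) auto



definition pv :: "real \<Rightarrow> real \<Rightarrow> real^2" where
  "pv a b = (\<chi> i. if i = 1 then a else b)"

lemma pv_comp [simp]: "pv a b $ 1 = a" "pv a b $ 2 = b"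
  by (simp_all add: pv_def)

lemma pv_eq: "pv a b = pv c d \<Longrightarrow> a = c \<and> b = d"
proof -
  assume h: "pv a b = pv c d"
  have "pv a b $ 1 = pv c d $ 1" "pv a b $ 2 = pv c d $ 2" using h by simp_all
  then show ?thesis by simp
qed

lemma dist_pv_le: "dist (pv a b) (pv c d) \<le> \<bar>a - c\<bar> + \<bar>b - d\<bar>"
proof -
  have "dist (pv a b) (pv c d) = norm (pv a b - pv c d)" by (simp add: dist_norm)
  also have "\<dots> \<le> (\<Sum>i\<in>UNIV. \<bar>(pv a b - pv c d) $ i\<bar>)" by (rule norm_le_l1_cart)
  also have "\<dots> = \<bar>a - c\<bar> + \<bar>b - d\<bar>" by (simp add: sum_2)
  finally show ?thesis .
qed

lemma dist_pv_ge:
  fixes a b c d :: real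
  shows "dist (pv a b) (pv c d) \<ge> \<bar>a - c\<bar>" "dist (pv a b) (pv c d) \<ge> \<bar>b - d\<bar>"
proof -
  have "\<bar>(pv a b - pv c d) $ 1\<bar> \<le> norm (pv a b - pv c d)" by (rule component_le_norm_cart)
  then show "\<bar>a - c\<bar> \<le> dist (pv a b) (pv c d)" by (simp add: dist_norm)
  have "\<bar>(pv a b - pv c d) $ 2\<bar> \<le> norm (pv a b - pv c d)" by (rule component_le_norm_cart)
  then show "\<bar>b - d\<bar> \<le> dist (pv a b) (pv c d)" by (simp add: dist_norm)
qed

lemma continuous_on_pv [continuous_intros]:
  assumes "continuous_on S f" "continuous_on S g"
  shows "continuous_on S (\<lambda>x. pv (f x) (g x))"
  unfolding pv_def
proof (intro continuous_on_vec_lambda)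
  fix i :: 2
  show "continuous_on S (\<lambda>x. if i = 1 then f x else g x)"
    by (cases "i = 1") (simp_all add: assms)
qed



fun E :: "pt \<Rightarrow> real^2" where
  "E P = pv 3 0"
| "E (Mp z) = pv 0 (phi z)"
| "E (Sa k w) = pv (1 / real (Suc k)) (phi w)"
| "E (Sb j w) = pv (3 - 1 / real (Suc j)) (phi w / real (Suc j))"

lemma inv_Suc_bounds: "0 < 1 / real (Suc k)" "1 / real (Suc k) \<le> 1"
  by auto

lemma E_inj: "E x = E y \<Longrightarrow> x = y"
proof -
  assume h: "E x = E y"
  have c1: "E x $ 1 = E y $ 1" and c2: "E x $ 2 = E y $ 2" using h by simp_all
  have a: "\<And>k j. 1 / real (Suc k) \<noteq> 3 - 1 / real (Suc j)"
  proof -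
    fix k j
    have "1 / real (Suc k) \<le> 1" "1 / real (Suc j) \<le> 1" by auto
    then show "1 / real (Suc k) \<noteq> 3 - 1 / real (Suc j)" by linarith
  qed
  have b: "\<And>j. 3 - 1 / real (Suc j) \<noteq> 3" by simp
  have dd: "\<And>k. 1 / real (Suc k) \<noteq> 3"
  proof -
    fix k have "1 / real (Suc k) \<le> 1" by auto
    then show "1 / real (Suc k) \<noteq> 3" by linarith
  qed
  have c: "\<And>j. 3 - 1 / real (Suc j) \<noteq> 0"
  proof -
    fix j have "1 / real (Suc j) \<le> 1" by auto
    then show "3 - 1 / real (Suc j) \<noteq> 0" by linarith
  qed
  show "x = y"
  proof (cases x)
    case P
    then show ?thesis using c1 c2 b[symmetric] dd by (cases y) (auto simp: eq_commute[of 3])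
  next
    case (Mp z)
    then show ?thesis using c1 c2 a c[symmetric] phi_inj dd by (cases y) auto
  next
    case (Sa k w)
    then show ?thesis using c1 c2 a phi_inj dd by (cases y) auto
  next
    case (Sb j w)
    then show ?thesis using c1 c2 a[symmetric] b c phi_inj by (cases y) auto
  qed
qed

lemma pow_le_inv: "(b::real) \<ge> 2 \<Longrightarrow> (1/b)^a \<le> 1 / (real a + 1)"
proof -
  assume b: "b \<ge> 2"
  have "real a + 1 \<le> b^a"
  proof (induction a)
    case 0 then show ?case by simp
  next
    case (Suc a)
    have "1 \<le> b^a" using b by (intro one_le_power) simp
    then have "real (Suc a) + 1 \<le> b^a + b^a" using Suc by simp
    also have "\<dots> \<le> b * b^a" using b \<open>1 \<le> b^a\<close> by (simp add: mult_right_mono[of 2 b "b^a", simplified])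
    finally show ?case by simp
  qed
  then have "1 / b^a \<le> 1 / (real a + 1)" by (intro divide_left_mono) auto
  then show ?thesis by (simp add: power_one_over)
qed

lemma abs_diff_le: "(0::real) \<le> a \<Longrightarrow> a \<le> c \<Longrightarrow> 0 \<le> b \<Longrightarrow> b \<le> c \<Longrightarrow> \<bar>a - b\<bar> \<le> c"
  by linarith

lemma lvM_ge_meet: "\<not> sp x y \<Longrightarrow> real (meet x y) \<le> lvM x y"
  using N_bounds(1) by (simp add: lvM_def)

lemma c1_M:
  assumes "isM x" "\<And>l. cap x = Some l \<Longrightarrow> m \<le> l"
  shows "0 \<le> E x $ 1" "E x $ 1 \<le> (1/2)^m" "E x $ 2 = phi (code x)"
proof -
  show "0 \<le> E x $ 1" using assms by (cases x) auto
  show "E x $ 2 = phi (code x)" using assms by (cases x) auto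
  show "E x $ 1 \<le> (1/2)^m"
  proof (cases x)
    case (Sa k w)
    have ml: "m \<le> Lg k" using assms(2)[of "lam k w"] Sa lam_le[of k w] by simp
    have "(2::real)^Lg k \<le> real (Suc k)"
      using Lg_bounds(1)[of k] by (metis of_nat_le_iff of_nat_numeral of_nat_power)
    then have "1 / real (Suc k) \<le> 1 / 2^Lg k" by (intro divide_left_mono) auto
    also have "\<dots> = (1/2)^Lg k" by (simp add: power_one_over)
    also have "\<dots> \<le> (1/2)^m" using ml by (intro power_decreasing) auto
    finally show ?thesis using Sa by simp
  qed (use assms in auto)
qed

lemma dist_E_le:
  assumes ne: "x \<noteq> y" and pos: "0 < lv x y"
  shows "dist (E x) (E y) \<le> 4 / lv x y"
proof (cases "isM x \<and> isM y")
  case True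
  then have lvM: "lv x y = lvM x y" by (simp add: lv_def)
  show ?thesis
  proof (cases "sp x y")
    case True
    then obtain k w w' where kw: "x = Sa k w" "y = Sa k w'" using sp_cases by blast
    define a where "a = agr w w'"
    have lvx: "lv x y = N a w + 1 / real (Suc k)" using True kw lvM by (simp add: lvM_def a_def)
    have lvlt: "lv x y < real a + 2" using lvx N_bounds(2)[of a w] inv_Suc_bounds(2)[of k] by linarith
    have "\<bar>phi w - phi w'\<bar> \<le> (1/3)^a" using agr_below by (intro phi_agree) (auto simp: a_def)
    also have "\<dots> \<le> 1 / (real a + 1)" by (rule pow_le_inv) simp
    finally have d1: "\<bar>phi w - phi w'\<bar> \<le> 1 / (real a + 1)" .
    have "dist (E x) (E y) \<le> \<bar>1 / real (Suc k) - 1 / real (Suc k)\<bar> + \<bar>phi w - phi w'\<bar>"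
      using kw dist_pv_le[of "1 / real (Suc k)" "phi w" "1 / real (Suc k)" "phi w'"] by simp
    also have "\<dots> \<le> 1 / (real a + 1)" using d1 by simp
    also have "\<dots> \<le> 4 / lv x y"
    proof -
      have "0 \<le> real a" by simp
      then have "lv x y \<le> 4 * (real a + 1)" using lvlt by (smt (verit))
      then show ?thesis using pos by (simp add: field_simps)
    qed
    finally show ?thesis .
  next
    case False
    define m where "m = meet x y"
    have lvx: "lv x y = N m (code x)" using False lvM by (simp add: lvM_def m_def)
    have lvlt: "lv x y < real m + 1" using lvx N_bounds(2) by simp
    have capx: "\<And>l. cap x = Some l \<Longrightarrow> m \<le> l" unfolding m_def by (rule meet_cap)
    have capy: "\<And>l. cap y = Some l \<Longrightarrow> m \<le> l" unfolding m_def by (subst meet_sym) (rule meet_cap)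
    note cx = c1_M[OF conjunct1[OF \<open>isM x \<and> isM y\<close>] capx]
    note cy = c1_M[OF conjunct2[OF \<open>isM x \<and> isM y\<close>] capy]
    have "\<bar>phi (code x) - phi (code y)\<bar> \<le> (1/3)^m"
      using meet_agree by (intro phi_agree) (auto simp: m_def)
    also have "\<dots> \<le> (1/2)^m" by (intro power_mono) auto
    finally have d2: "\<bar>phi (code x) - phi (code y)\<bar> \<le> (1/2)^m" .
    have d1: "\<bar>E x $ 1 - E y $ 1\<bar> \<le> (1/2)^m" using cx cy by (intro abs_diff_le) auto
    have ex: "E x = pv (E x $ 1) (E x $ 2)" "E y = pv (E y $ 1) (E y $ 2)"
      by (simp_all add: pv_def vec_eq_iff forall_2)
    have "dist (E x) (E y) \<le> \<bar>E x $ 1 - E y $ 1\<bar> + \<bar>E x $ 2 - E y $ 2\<bar>"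
      using dist_pv_le[of "E x $ 1" "E x $ 2" "E y $ 1" "E y $ 2"] ex by simp
    also have "\<dots> \<le> 2 * (1/2)^m" using d1 d2 cx cy by simp
    also have "\<dots> \<le> 2 / (real m + 1)" using pow_le_inv[of 2 m] by simp
    also have "\<dots> \<le> 4 / lv x y"
    proof -
      have "0 \<le> real m" by simp
      then have "lv x y \<le> 2 * (real m + 1)" using lvlt by (smt (verit))
      then show ?thesis using pos by (simp add: field_simps)
    qed
    finally show ?thesis .
  qed
next
  case F: False
  have PP: "isPs x \<and> isPs y"
  proof (rule ccontr)
    assume "\<not> (isPs x \<and> isPs y)"
    then have "lv x y = 0" using F unfolding lv_def by auto
    then show False using pos by simp
  qed
  have lvP: "lv x y = lvP x y" using PP F unfolding lv_def by auto
  have ib: "\<And>j. 0 < 1 / real (Suc j)" "\<And>j. 1 / real (Suc j) \<le> 1" by auto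
  have phib: "\<And>w j. 0 \<le> phi w / real (Suc j)" "\<And>w j. phi w / real (Suc j) \<le> 1 / real (Suc j)"
    using phi_bounds by (auto simp: divide_right_mono)
  consider (a) j w where "x = P" "y = Sb j w" | (b) j w where "x = Sb j w" "y = P"
    | (c) j w w' where "x = Sb j w" "y = Sb j w'" | (d) j w j' w' where "x = Sb j w" "y = Sb j' w'" "j \<noteq> j'"
    using PP ne by (cases x; cases y) auto
  then show ?thesis
  proof cases
    case a
    have "dist (E x) (E y) \<le> \<bar>3 - (3 - 1 / real (Suc j))\<bar> + \<bar>0 - phi w / real (Suc j)\<bar>"
      using a dist_pv_le[of 3 0 "3 - 1 / real (Suc j)" "phi w / real (Suc j)"] by (simp only: E.simps)
    also have "\<dots> \<le> 2 / real (Suc j)" using phib[of w j] ib[of j] by simp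
    also have "\<dots> \<le> 4 / lv x y" using a lvP by (simp add: divide_right_mono)
    finally show ?thesis .
  next
    case b
    have "dist (E x) (E y) \<le> \<bar>(3 - 1 / real (Suc j)) - 3\<bar> + \<bar>phi w / real (Suc j) - 0\<bar>"
      using b dist_pv_le[of "3 - 1 / real (Suc j)" "phi w / real (Suc j)" 3 0] by (simp only: E.simps)
    also have "\<dots> \<le> 2 / real (Suc j)" using phib[of w j] ib[of j] by simp
    also have "\<dots> \<le> 4 / lv x y" using b lvP by (simp add: divide_right_mono)
    finally show ?thesis .
  next
    case c
    define a where "a = agr w w'"
    have lvx: "lv x y = real a + 2 + real j" using c lvP by (simp add: a_def)
    have "\<bar>phi w - phi w'\<bar> \<le> (1/3)^a" using agr_below by (intro phi_agree) (auto simp: a_def)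
    also have "\<dots> \<le> 1 / (real a + 1)" by (rule pow_le_inv) simp
    finally have d1: "\<bar>phi w - phi w'\<bar> \<le> 1 / (real a + 1)" .
    have "dist (E x) (E y) \<le> \<bar>(3 - 1 / real (Suc j)) - (3 - 1 / real (Suc j))\<bar> + \<bar>phi w / real (Suc j) - phi w' / real (Suc j)\<bar>"
      using c dist_pv_le[of "3 - 1 / real (Suc j)" "phi w / real (Suc j)" "3 - 1 / real (Suc j)" "phi w' / real (Suc j)"] by (simp only: E.simps)
    also have "\<dots> = \<bar>phi w - phi w'\<bar> / real (Suc j)" by (simp add: diff_divide_distrib[symmetric])
    also have "\<dots> \<le> (1 / (real a + 1)) / real (Suc j)"
      using d1 by (rule divide_right_mono) simp
    also have "\<dots> = 1 / ((real a + 1) * real (Suc j))" by simp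
    also have "\<dots> \<le> 4 / lv x y"
    proof -
      define Q where "Q = (real a + 1) * real (Suc j)"
      have Qp: "0 < Q" by (simp add: Q_def)
      have "real a + 2 + real j \<le> 4 * Q"
        by (simp add: algebra_simps Q_def)
      then have "4 / (4 * Q) \<le> 4 / lv x y" using lvx pos by (intro divide_left_mono) auto
      then show ?thesis using Qp by (simp add: Q_def)
    qed
    finally show ?thesis .
  next
    case d
    define mn where "mn = min j j'"
    have lvx: "lv x y = 1 + real mn" using d lvP by (simp add: mn_def)
    have q1: "1 / real (Suc j) \<le> 1 / real (Suc mn)" "1 / real (Suc j') \<le> 1 / real (Suc mn)"
      by (auto simp: mn_def divide_left_mono)
    have e1: "\<bar>(3 - 1 / real (Suc j)) - (3 - 1 / real (Suc j'))\<bar> \<le> 1 / real (Suc mn)"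
    proof -
      have "\<bar>(3 - 1 / real (Suc j)) - (3 - 1 / real (Suc j'))\<bar> = \<bar>1 / real (Suc j') - 1 / real (Suc j)\<bar>"
        by simp
      also have "\<dots> \<le> 1 / real (Suc mn)"
        using q1 ib(1)[of j] ib(1)[of j'] by (intro abs_diff_le) auto
      finally show ?thesis .
    qed
    have e2: "\<bar>phi w / real (Suc j) - phi w' / real (Suc j')\<bar> \<le> 1 / real (Suc mn)"
      using q1 phib[of w j] phib[of w' j'] by (intro abs_diff_le) auto
    have "dist (E x) (E y) \<le> \<bar>(3 - 1 / real (Suc j)) - (3 - 1 / real (Suc j'))\<bar> + \<bar>phi w / real (Suc j) - phi w' / real (Suc j')\<bar>"
      using d dist_pv_le[of "3 - 1 / real (Suc j)" "phi w / real (Suc j)" "3 - 1 / real (Suc j')" "phi w' / real (Suc j')"] by (simp only: E.simps)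
    also have "\<dots> \<le> 2 / real (Suc mn)" using e1 e2 by simp
    also have "\<dots> \<le> 4 / lv x y" using lvx by (simp add: divide_right_mono)
    finally show ?thesis .
  qed
qed



lemma inv_lt_imp: "0 < a \<Longrightarrow> 0 < b \<Longrightarrow> 1 / a < 1 / b \<Longrightarrow> b < (a::real)"
  using inverse_less_iff_less[of a b] by (simp add: inverse_eq_divide)

lemma gap:
  assumes "j \<noteq> j'"
  shows "1 / (real (Suc j) * real (Suc (Suc j))) \<le> \<bar>1 / real (Suc j) - 1 / real (Suc j')\<bar>"
proof -
  have e1: "1 / real (Suc j) - 1 / real (Suc (Suc j)) = 1 / (real (Suc j) * real (Suc (Suc j)))"
    by (simp add: field_simps)
  show ?thesis
  proof (cases "j < j'")
    case True
    then have "1 / real (Suc j') \<le> 1 / real (Suc (Suc j))" by (intro divide_left_mono) auto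
    then show ?thesis using e1 by simp
  next
    case False
    then have jj: "j' < j" using assms by simp
    then obtain i where i: "j = Suc i" by (cases j) auto
    have "1 / real (Suc i) \<le> 1 / real (Suc j')" using jj i by (intro divide_left_mono) auto
    moreover have "1 / real (Suc i) - 1 / real (Suc j) = 1 / (real (Suc i) * real (Suc j))"
      using i by (simp add: field_simps)
    moreover have "1 / (real (Suc j) * real (Suc (Suc j))) \<le> 1 / (real (Suc i) * real (Suc j))"
      using i by (intro divide_left_mono mult_mono) auto
    moreover have "1 / real (Suc j) \<le> 1 / real (Suc j')" using jj by (intro divide_left_mono) auto
    ultimately show ?thesis by simp
  qed
qed

lemma meet_ge: "\<exists>i. mcond x y i \<Longrightarrow> \<forall>i<m. \<not> mcond x y i \<Longrightarrow> m \<le> meet x y"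
  using meet_cond_ex not_less by blast

lemma gap_small: "1 / (real (Suc j) * real (Suc (Suc j))) \<le> 1 / real (Suc j)"
  by (intro divide_left_mono) auto

lemma gap_half: "1 / (real (Suc j) * real (Suc (Suc j))) \<le> 1 / 2"
proof -
  have "(2::real) \<le> real (Suc j) * real (Suc (Suc j))"
    using mult_mono[of 1 "real (Suc j)" 2 "real (Suc (Suc j))"] by simp
  then show ?thesis by (intro divide_left_mono) auto
qed

lemma far: "(c::real) \<le> A \<Longrightarrow> A \<le> D \<Longrightarrow> D < \<eta> \<Longrightarrow> \<eta> \<le> c \<Longrightarrow> False"
  by linarith

lemma absge1: "(c::real) \<le> a - b \<Longrightarrow> c \<le> \<bar>a - b\<bar>" by linarith
lemma absge2: "(c::real) \<le> b - a \<Longrightarrow> c \<le> \<bar>a - b\<bar>" by linarith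
lemma inv_Suc_le: "1 / real (Suc j) \<le> 1" by simp
lemma inv_Suc_pos: "0 < 1 / real (Suc j)" by simp

lemma E_close: "\<exists>\<eta>>0. \<forall>y. dist (E x) (E y) < \<eta> \<longrightarrow> y = x \<or> T < lv x y"
proof -
  obtain n :: nat where n: "T < real n" using reals_Archimedean2 by blast
  show ?thesis
  proof (cases x)
    case P
    define \<eta> where "\<eta> = 1 / (real n + 2)"
    have \<eta>h: "\<eta> \<le> 1/2" "0 < \<eta>" by (auto simp: \<eta>_def)
    show ?thesis
    proof (intro exI[of _ \<eta>] conjI allI impI \<eta>h(2))
      fix y assume d: "dist (E x) (E y) < \<eta>"
      show "y = x \<or> T < lv x y"
      proof (cases y)
        case P then show ?thesis using \<open>x = P\<close> by simp
      next
        case (Mp z)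
        have X: "\<bar>3 - 0\<bar> \<le> dist (E x) (E y)" using P Mp dist_pv_ge(1)[of 3 0 0 "phi z"] by simp
        have C: "(1/2::real) \<le> \<bar>3 - 0\<bar>" by (rule absge1) simp
        have False by (rule far[OF C X d \<eta>h(1)])
        then show ?thesis ..
      next
        case (Sa k w)
        define t where "t = 1 / real (Suc k)"
        have t1: "t \<le> 1" by (simp add: t_def)
        have "\<bar>3 - t\<bar> \<le> dist (E x) (E y)"
          using P Sa dist_pv_ge(1)[of 3 t 0 "phi w"] by (simp add: t_def)
        moreover have "3 - t \<le> \<bar>3 - t\<bar>" by (rule abs_ge_self)
        ultimately have False using d \<eta>h t1 by linarith
        then show ?thesis ..
      next
        case (Sb j w)
        have "\<bar>3 - (3 - 1 / real (Suc j))\<bar> \<le> dist (E x) (E y)"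
          using P Sb dist_pv_ge(1)[of 3 "3 - 1 / real (Suc j)" 0 "phi w / real (Suc j)"] by simp
        then have "1 / real (Suc j) < 1 / (real n + 2)" using d by (simp add: \<eta>_def)
        then have "real n + 2 < real (Suc j)" by (rule inv_lt_imp[rotated 2]) auto
        then have "T < 1 + real j" using n by simp
        then show ?thesis using P Sb by (simp add: lv_def)
      qed
    qed
  next
    case (Sb j w)
    define \<eta> where "\<eta> = min (1 / (real (Suc j) * real (Suc (Suc j)))) ((1/3)^n / real (Suc j))"
    have h3: "\<eta> \<le> 1 / (real (Suc j) * real (Suc (Suc j)))" unfolding \<eta>_def by (rule min.cobounded1)
    have h4: "\<eta> \<le> (1/3)^n / real (Suc j)" unfolding \<eta>_def by (rule min.cobounded2)
    have h2: "0 < \<eta>" unfolding \<eta>_def by simp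
    have h1: "\<eta> \<le> 1/2" using h3 gap_half[of j] by linarith
    note \<eta>h = h1 h2 h3 h4
    show ?thesis
    proof (intro exI[of _ \<eta>] conjI allI impI \<eta>h(2))
      fix y assume d: "dist (E x) (E y) < \<eta>"
      have ib: "1 / real (Suc j) \<le> 1" by simp
      show "y = x \<or> T < lv x y"
      proof (cases y)
        case P
        have X: "\<bar>(3 - 1 / real (Suc j)) - 3\<bar> \<le> dist (E x) (E y)"
          using P Sb dist_pv_ge(1)[of "3 - 1 / real (Suc j)" 3 "phi w / real (Suc j)" 0] by simp
        have C: "1 / (real (Suc j) * real (Suc (Suc j))) \<le> \<bar>(3 - 1 / real (Suc j)) - 3\<bar>"
          by (rule absge2) (use gap_small[of j] in simp)
        have False by (rule far[OF C X d \<eta>h(3)])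
        then show ?thesis ..
      next
        case (Mp z)
        have X: "\<bar>(3 - 1 / real (Suc j)) - 0\<bar> \<le> dist (E x) (E y)"
          using Mp Sb dist_pv_ge(1)[of "3 - 1 / real (Suc j)" 0 "phi w / real (Suc j)" "phi z"] by simp
        have C: "(1/2::real) \<le> \<bar>(3 - 1 / real (Suc j)) - 0\<bar>"
          by (rule absge1) (use inv_Suc_le[of j] in linarith)
        have False by (rule far[OF C X d \<eta>h(1)])
        then show ?thesis ..
      next
        case (Sa k w')
        have X: "\<bar>(3 - 1 / real (Suc j)) - 1 / real (Suc k)\<bar> \<le> dist (E x) (E y)"
          using Sa Sb dist_pv_ge(1)[of "3 - 1 / real (Suc j)" "1 / real (Suc k)" "phi w / real (Suc j)" "phi w'"] by simp
        have C: "(1/2::real) \<le> \<bar>(3 - 1 / real (Suc j)) - 1 / real (Suc k)\<bar>"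
          by (rule absge1) (use inv_Suc_le[of j] inv_Suc_le[of k] in linarith)
        have False by (rule far[OF C X d \<eta>h(1)])
        then show ?thesis ..
      next
        case (Sb j' w')
        show ?thesis
        proof (cases "j' = j")
          case False
          have "\<bar>(3 - 1 / real (Suc j)) - (3 - 1 / real (Suc j'))\<bar> \<le> dist (E x) (E y)"
            using \<open>x = Sb j w\<close> Sb dist_pv_ge(1)[of "3 - 1 / real (Suc j)" "3 - 1 / real (Suc j')" "phi w / real (Suc j)" "phi w' / real (Suc j')"] by simp
          moreover have "1 / (real (Suc j) * real (Suc (Suc j))) \<le> \<bar>1 / real (Suc j) - 1 / real (Suc j')\<bar>"
            using False by (intro gap) simp
          moreover have "\<bar>(3 - 1 / real (Suc j)) - (3 - 1 / real (Suc j'))\<bar> = \<bar>1 / real (Suc j) - 1 / real (Suc j')\<bar>"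
            by (simp add: abs_minus_commute)
          ultimately have X: "\<bar>1 / real (Suc j) - 1 / real (Suc j')\<bar> \<le> dist (E x) (E y)"
            and C: "1 / (real (Suc j) * real (Suc (Suc j))) \<le> \<bar>1 / real (Suc j) - 1 / real (Suc j')\<bar>"
            by simp_all
          have False by (rule far[OF C X d \<eta>h(3)])
          then show ?thesis ..
        next
          case True
          have "\<bar>phi w / real (Suc j) - phi w' / real (Suc j)\<bar> \<le> dist (E x) (E y)"
            using \<open>x = Sb j w\<close> Sb True dist_pv_ge(2)[of "phi w / real (Suc j)" "phi w' / real (Suc j)" "3 - 1 / real (Suc j)" "3 - 1 / real (Suc j)"] by simp
          then have "\<bar>phi w - phi w'\<bar> / real (Suc j) < (1/3)^n / real (Suc j)"
            using d \<eta>h by (simp add: diff_divide_distrib[symmetric])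
          then have "\<bar>phi w - phi w'\<bar> < (1/3)^n" by (simp add: divide_less_cancel)
          then have ag: "\<forall>i<n. w i = w' i" by (rule phi_close)
          show ?thesis
          proof (cases "w = w'")
            case True then show ?thesis using \<open>x = Sb j w\<close> Sb \<open>j' = j\<close> by simp
          next
            case False
            have "n \<le> agr w w'" by (rule agr_ge[OF ag False])
            then have "T < real (agr w w') + 2 + real j" using n by linarith
            then show ?thesis using \<open>x = Sb j w\<close> Sb \<open>j' = j\<close> by (simp add: lv_def)
          qed
        qed
      qed
    qed
  next
    case (Sa k w)
    define \<eta> where "\<eta> = min (1 / (real (Suc k) * real (Suc (Suc k)))) ((1/3)^(n + Lg k))"
    have h3: "\<eta> \<le> 1 / (real (Suc k) * real (Suc (Suc k)))" unfolding \<eta>_def by (rule min.cobounded1)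
    have h4: "\<eta> \<le> (1/3)^(n + Lg k)" unfolding \<eta>_def by (rule min.cobounded2)
    have h2: "0 < \<eta>" unfolding \<eta>_def by simp
    have h1: "\<eta> \<le> 1/2" using h3 gap_half[of k] by linarith
    note \<eta>h = h1 h2 h3 h4
    show ?thesis
    proof (intro exI[of _ \<eta>] conjI allI impI \<eta>h(2))
      fix y assume d: "dist (E x) (E y) < \<eta>"
      have ib: "1 / real (Suc k) \<le> 1" "0 < 1 / real (Suc k)" by simp_all
      show "y = x \<or> T < lv x y"
      proof (cases y)
        case P
        have X: "\<bar>1 / real (Suc k) - 3\<bar> \<le> dist (E x) (E y)"
          using P Sa dist_pv_ge(1)[of "1 / real (Suc k)" 3 "phi w" 0] by simp
        have C: "(1/2::real) \<le> \<bar>1 / real (Suc k) - 3\<bar>"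
          by (rule absge2) (use inv_Suc_le[of k] in linarith)
        have False by (rule far[OF C X d \<eta>h(1)])
        then show ?thesis ..
      next
        case (Sb j w')
        have X: "\<bar>1 / real (Suc k) - (3 - 1 / real (Suc j))\<bar> \<le> dist (E x) (E y)"
          using Sa Sb dist_pv_ge(1)[of "1 / real (Suc k)" "3 - 1 / real (Suc j)" "phi w" "phi w' / real (Suc j)"] by simp
        have C: "(1/2::real) \<le> \<bar>1 / real (Suc k) - (3 - 1 / real (Suc j))\<bar>"
          by (rule absge2) (use inv_Suc_le[of j] inv_Suc_le[of k] in linarith)
        have False by (rule far[OF C X d \<eta>h(1)])
        then show ?thesis ..
      next
        case (Mp z)
        have X: "\<bar>1 / real (Suc k) - 0\<bar> \<le> dist (E x) (E y)"
          using Sa Mp dist_pv_ge(1)[of "1 / real (Suc k)" 0 "phi w" "phi z"] by simp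
        have C: "1 / (real (Suc k) * real (Suc (Suc k))) \<le> \<bar>1 / real (Suc k) - 0\<bar>"
          by (rule absge1) (use gap_small[of k] in simp)
        have False by (rule far[OF C X d \<eta>h(3)])
        then show ?thesis ..
      next
        case (Sa k' w')
        show ?thesis
        proof (cases "k' = k")
          case False
          have X: "\<bar>1 / real (Suc k) - 1 / real (Suc k')\<bar> \<le> dist (E x) (E y)"
            using \<open>x = Sa k w\<close> Sa dist_pv_ge(1)[of "1 / real (Suc k)" "1 / real (Suc k')" "phi w" "phi w'"] by simp
          have C: "1 / (real (Suc k) * real (Suc (Suc k))) \<le> \<bar>1 / real (Suc k) - 1 / real (Suc k')\<bar>"
            using False by (intro gap) simp
          have False by (rule far[OF C X d \<eta>h(3)])
          then show ?thesis ..
        next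
          case True
          have "\<bar>phi w - phi w'\<bar> \<le> dist (E x) (E y)"
            using \<open>x = Sa k w\<close> Sa True dist_pv_ge(2)[of "phi w" "phi w'" "1 / real (Suc k)" "1 / real (Suc k)"] by simp
          then have "\<bar>phi w - phi w'\<bar> < (1/3)^(n + Lg k)" using d \<eta>h by simp
          then have ag: "\<forall>i<n + Lg k. w i = w' i" by (rule phi_close)
          show ?thesis
          proof (cases "w = w'")
            case True then show ?thesis using \<open>x = Sa k w\<close> Sa \<open>k' = k\<close> by simp
          next
            case False
            have a1: "n + Lg k \<le> agr w w'" by (rule agr_ge[OF ag False])
            have spx: "sp x y" using \<open>x = Sa k w\<close> Sa \<open>k' = k\<close> ag by auto
            have "lv x y = N (agr w w') w + 1 / real (Suc k)"
              using spx \<open>x = Sa k w\<close> Sa \<open>k' = k\<close> by (simp add: lv_def lvM_def)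
            moreover have "real (agr w w') \<le> N (agr w w') w" by (rule N_bounds(1))
            moreover have "real n \<le> real (agr w w')" using a1 by simp
            ultimately have "T < lv x y" using n ib(2) by linarith
            then show ?thesis by simp
          qed
        qed
      qed
    qed
  next
    case (Mp z)
    define \<eta> where "\<eta> = min ((1/2::real)^(n+2)) ((1/3)^(n+1))"
    have h4: "(1/2::real)^(n+2) \<le> 1/4"
    proof -
      have "(1/2::real)^(n+2) \<le> (1/2)^2" by (intro power_decreasing) auto
      then show ?thesis by (simp add: power2_eq_square)
    qed
    have \<eta>h: "\<eta> \<le> 1/4" "0 < \<eta>" "\<eta> \<le> (1/2)^(n+2)" "\<eta> \<le> (1/3)^(n+1)"
      using h4 by (auto simp: \<eta>_def)
    show ?thesis
    proof (intro exI[of _ \<eta>] conjI allI impI \<eta>h(2))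
      fix y assume d: "dist (E x) (E y) < \<eta>"
      show "y = x \<or> T < lv x y"
      proof (cases y)
        case P
        have X: "\<bar>0 - 3\<bar> \<le> dist (E x) (E y)"
          using P Mp dist_pv_ge(1)[of 0 3 "phi z" 0] by simp
        have C: "(1/4::real) \<le> \<bar>0 - 3\<bar>" by (rule absge2) simp
        have False by (rule far[OF C X d \<eta>h(1)])
        then show ?thesis ..
      next
        case (Sb j w')
        have X: "\<bar>0 - (3 - 1 / real (Suc j))\<bar> \<le> dist (E x) (E y)"
          using Mp Sb dist_pv_ge(1)[of 0 "3 - 1 / real (Suc j)" "phi z" "phi w' / real (Suc j)"] by simp
        have C: "(1/4::real) \<le> \<bar>0 - (3 - 1 / real (Suc j))\<bar>"
          by (rule absge2) (use inv_Suc_le[of j] in linarith)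
        have False by (rule far[OF C X d \<eta>h(1)])
        then show ?thesis ..
      next
        case (Mp z')
        have "\<bar>phi z - phi z'\<bar> \<le> dist (E x) (E y)"
          using \<open>x = Mp z\<close> Mp dist_pv_ge(2)[of "phi z" "phi z'" 0 0] by simp
        then have "\<bar>phi z - phi z'\<bar> < (1/3)^(n+1)" using d \<eta>h by simp
        then have ag: "\<forall>i<n+1. z i = z' i" by (rule phi_close)
        show ?thesis
        proof (cases "z = z'")
          case True then show ?thesis using \<open>x = Mp z\<close> Mp by simp
        next
          case False
          have ex: "\<exists>i. mcond x y i" using ex_M \<open>x = Mp z\<close> Mp False by auto
          have "n + 1 \<le> meet x y"
            by (rule meet_ge[OF ex]) (use ag \<open>x = Mp z\<close> Mp in \<open>auto simp: mcond_def\<close>)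
          moreover have "lv x y = N (meet x y) z" using \<open>x = Mp z\<close> Mp by (simp add: lv_def lvM_def)
          moreover have "real (meet x y) \<le> N (meet x y) z" by (rule N_bounds(1))
          ultimately show ?thesis using n by simp
        qed
      next
        case (Sa k w')
        have "\<bar>0 - 1 / real (Suc k)\<bar> \<le> dist (E x) (E y)"
          using \<open>x = Mp z\<close> Sa dist_pv_ge(1)[of 0 "1 / real (Suc k)" "phi z" "phi w'"] by simp
        then have k1: "1 / real (Suc k) < (1/2)^(n+2)" using d \<eta>h by simp
        have Lk: "n + 2 \<le> Lg k"
        proof (rule ccontr)
          assume "\<not> n + 2 \<le> Lg k"
          then have "Suc (Lg k) \<le> n + 2" by simp
          then have "(2::nat)^Suc (Lg k) \<le> 2^(n+2)" by (intro power_increasing) auto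
          moreover have "Suc k < 2 * 2^Lg k" by (rule Lg_bounds(2))
          ultimately have "Suc k < 2^(n+2)" by simp
          then have "real (Suc k) < 2^(n+2)" by (metis of_nat_less_iff of_nat_numeral of_nat_power)
          then have "1 / 2^(n+2) < 1 / real (Suc k)" by (intro divide_strict_left_mono) auto
          then show False using k1 by (simp add: power_one_over)
        qed
        have lamk: "n + 1 \<le> lam k w'" using Lk lam_le(2)[of k w'] by simp
        have "\<bar>phi z - phi w'\<bar> \<le> dist (E x) (E y)"
          using \<open>x = Mp z\<close> Sa dist_pv_ge(2)[of "phi z" "phi w'" 0 "1 / real (Suc k)"] by simp
        then have "\<bar>phi z - phi w'\<bar> < (1/3)^(n+1)" using d \<eta>h by simp
        then have ag: "\<forall>i<n+1. z i = w' i" by (rule phi_close)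
        have ex: "\<exists>i. mcond x y i" using ex_M \<open>x = Mp z\<close> Sa by auto
        have "n + 1 \<le> meet x y"
          by (rule meet_ge[OF ex]) (use ag lamk \<open>x = Mp z\<close> Sa in \<open>auto simp: mcond_def\<close>)
        moreover have "lv x y = N (meet x y) z" using \<open>x = Mp z\<close> Sa by (simp add: lv_def lvM_def)
        moreover have "real (meet x y) \<le> N (meet x y) z" by (rule N_bounds(1))
        ultimately show ?thesis using n by simp
      qed
    qed
  qed
qed

definition flip :: "nat \<Rightarrow> bits \<Rightarrow> bits" where "flip n w = w(n := \<not> w n)"

lemma flip_ne: "flip n w \<noteq> w"
  by (metis flip_def fun_upd_same)

lemma agr_flip: "agr w (flip n w) = n"
  unfolding agr_def flip_def by (rule Least_equality) (auto split: if_splits)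

lemma perf_sym: "\<exists>y. y \<noteq> x \<and> T < lv x y"
proof -
  obtain n :: nat where n: "T < real n" using reals_Archimedean2 by blast
  show ?thesis
  proof (cases x)
    case P
    then show ?thesis using n by (intro exI[of _ "Sb n (\<lambda>_. False)"]) (auto simp: lv_def)
  next
    case (Sb j w)
    have "T < real (agr w (flip n w)) + 2 + real j" using n by (simp add: agr_flip)
    then show ?thesis using Sb flip_ne[of n w]
      by (intro exI[of _ "Sb j (flip n w)"]) (auto simp: lv_def)
  next
    case (Sa k w)
    define v where "v = flip (n + Lg k) w"
    have ag: "\<forall>i<Lg k. w i = v i" by (auto simp: v_def flip_def)
    have spx: "sp x (Sa k v)" using Sa ag by simp
    have av: "agr w v = n + Lg k" by (simp add: v_def agr_flip)
    have l1: "lv x (Sa k v) = N (n + Lg k) w + 1 / real (Suc k)"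
      using spx Sa av by (simp add: lv_def lvM_def)
    have l2: "real n + real (Lg k) \<le> N (n + Lg k) w" using N_bounds(1)[of "n + Lg k" w] by simp
    have l3: "0 < 1 / real (Suc k)" by simp
    have l4: "0 \<le> real (Lg k)" by simp
    have "T < lv x (Sa k v)" unfolding l1 using n l2 l3 l4 by linarith
    moreover have "Sa k v \<noteq> x" using Sa flip_ne by (simp add: v_def)
    ultimately show ?thesis by blast
  next
    case (Mp z)
    define v where "v = flip n z"
    have nv: "x \<noteq> Mp v" using Mp flip_ne[of n z] by (auto simp: v_def)
    have ex: "\<exists>i. mcond x (Mp v) i" using ex_M[OF _ _ nv] Mp by simp
    have "n \<le> meet x (Mp v)"
      by (rule meet_ge[OF ex]) (auto simp: mcond_def Mp v_def flip_def)
    moreover have "lv x (Mp v) = N (meet x (Mp v)) z" using Mp by (simp add: lv_def lvM_def)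
    moreover have "real (meet x (Mp v)) \<le> N (meet x (Mp v)) z" by (rule N_bounds(1))
    ultimately have "T < lv x (Mp v)" using n by simp
    moreover have "Mp v \<noteq> x" using Mp flip_ne by (simp add: v_def)
    ultimately show ?thesis by blast
  qed
qed



definition Wc :: "(real^2) set" where "Wc = range E"
definition dr :: "real^2 \<Rightarrow> real^2 \<Rightarrow> real" where "dr u v = ds (inv E u) (inv E v)"
definition Gr :: "real^2 \<Rightarrow> real^2" where "Gr v = E (Gs (inv E v))"

lemma inj_E: "inj E" using E_inj by (auto simp: inj_def)

lemma invE [simp]: "inv E (E x) = x" using inj_E by (rule inv_f_f)

lemma dr_E [simp]: "dr (E x) (E y) = ds x y" by (simp add: dr_def)
lemma Gr_E [simp]: "Gr (E x) = E (Gs x)" by (simp add: Gr_def)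

lemma W_E: "u \<in> Wc \<Longrightarrow> \<exists>x. u = E x" by (auto simp: Wc_def)
lemma E_W [simp]: "E x \<in> Wc" by (simp add: Wc_def)

lemma metric_W: "Metric_space Wc dr"
proof
  fix x y z
  show "0 \<le> dr x y" by (simp add: dr_def ds_nonneg)
  show "dr x y = dr y x" by (simp add: dr_def ds_sym)
  show "x \<in> Wc \<Longrightarrow> y \<in> Wc \<Longrightarrow> dr x y = 0 \<longleftrightarrow> x = y"
    using E_inj by (auto simp: Wc_def ds_zero)
  show "dr x z \<le> dr x y + dr y z" if "x \<in> Wc" "y \<in> Wc" "z \<in> Wc"
    by (simp add: dr_def ds_triangle)
qed

lemma inv_lt_imp2: "0 < r \<Longrightarrow> 1 / r < a \<Longrightarrow> 1 / a < (r::real)"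
proof -
  assume r: "0 < r" "1 / r < a"
  then have a: "0 < a" using less_trans[of 0 "1/r" a] by simp
  have "1 / a < 1 / (1 / r)" using r a by (intro divide_strict_left_mono) auto
  then show ?thesis by simp
qed

lemma close_i: "0 < ep \<Longrightarrow> \<exists>r>0. \<forall>y. ds x y < r \<longrightarrow> dist (E x) (E y) < ep"
proof -
  assume ep: "0 < ep"
  define r where "r = 1 / (1 + 4 / ep)"
  have "0 < 4 / ep" using ep by simp
  then have r0: "0 < r" unfolding r_def by (simp add: add_pos_pos)
  show ?thesis
  proof (intro exI[of _ r] conjI allI impI r0)
    fix y assume d: "ds x y < r"
    show "dist (E x) (E y) < ep"
    proof (cases "y = x")
      case True then show ?thesis using ep by simp
    next
      case False
      have l0: "0 \<le> lv x y" by (rule lv_nonneg)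
      have h: "1 / (1 + lv x y) < 1 / (1 + 4 / ep)" using d False by (simp add: ds_def r_def eq_commute)
      have p4: "0 < 4 / ep" using ep by simp
      have h1: "0 < 1 + lv x y" using l0 by linarith
      have h2: "0 < 1 + 4 / ep" using p4 by linarith
      have "1 + 4 / ep < 1 + lv x y" by (rule inv_lt_imp[OF h1 h2 h])
      then have lt: "4 / ep < lv x y" by simp
      have pos: "0 < lv x y" using lt p4 by linarith
      have "dist (E x) (E y) \<le> 4 / lv x y" using dist_E_le[OF _ pos] False by auto
      also have "\<dots> < 4 / (4 / ep)"
      proof (rule divide_strict_left_mono[OF lt])
        show "(0::real) < 4" by simp
        show "0 < lv x y * (4 / ep)" using pos p4 by (rule mult_pos_pos)
      qed
      also have "\<dots> = ep" using ep by simp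
      finally show ?thesis .
    qed
  qed
qed

lemma close_ii: "0 < r \<Longrightarrow> \<exists>\<eta>>0. \<forall>y. dist (E x) (E y) < \<eta> \<longrightarrow> ds x y < r"
proof -
  assume r: "0 < r"
  obtain \<eta> where \<eta>: "\<eta> > 0" "\<forall>y. dist (E x) (E y) < \<eta> \<longrightarrow> y = x \<or> 1 / r - 1 < lv x y"
    using E_close by blast
  show ?thesis
  proof (intro exI[of _ \<eta>] conjI allI impI \<eta>(1))
    fix y assume d: "dist (E x) (E y) < \<eta>"
    show "ds x y < r"
    proof (cases "y = x")
      case True then show ?thesis using r by (simp add: ds_def)
    next
      case False
      then have "1 / r - 1 < lv x y" using \<eta>(2) d by blast
      then have "1 / r < 1 + lv x y" by simp
      then have "1 / (1 + lv x y) < r" by (rule inv_lt_imp2[OF r])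
      then show ?thesis using False by (simp add: ds_def eq_commute)
    qed
  qed
qed

lemma top_eq: "Metric_space.mtopology Wc dr = top_of_set Wc"
proof -
  interpret Metric_space Wc dr by (rule metric_W)
  show ?thesis
  unfolding topology_eq
  proof (intro allI iffI)
    fix S assume "openin mtopology S"
    then have S: "S \<subseteq> Wc" "\<forall>u. u \<in> S \<longrightarrow> (\<exists>r>0. mball u r \<subseteq> S)"
      by (auto simp: openin_mtopology)
    show "openin (top_of_set Wc) S"
      unfolding openin_euclidean_subtopology_iff
    proof (intro conjI ballI S(1))
      fix u assume u: "u \<in> S"
      then obtain x where x: "u = E x" using S(1) W_E by blast
      obtain r where r: "r > 0" "mball u r \<subseteq> S" using S(2) u by blast
      obtain \<eta> where \<eta>: "\<eta> > 0" "\<forall>y. dist (E x) (E y) < \<eta> \<longrightarrow> ds x y < r"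
        using close_ii[OF r(1)] by blast
      show "\<exists>e>0. \<forall>x'\<in>Wc. dist x' u < e \<longrightarrow> x' \<in> S"
      proof (intro exI[of _ \<eta>] conjI ballI impI \<eta>(1))
        fix u' assume u': "u' \<in> Wc" "dist u' u < \<eta>"
        then obtain y where y: "u' = E y" using W_E by blast
        have "ds x y < r" using \<eta>(2) u' x y by (simp add: dist_commute)
        then have "u' \<in> mball u r" using x y u S(1) by auto
        then show "u' \<in> S" using r(2) by blast
      qed
    qed
  next
    fix S assume "openin (top_of_set Wc) S"
    then have S: "S \<subseteq> Wc" "\<forall>u\<in>S. \<exists>e>0. \<forall>x'\<in>Wc. dist x' u < e \<longrightarrow> x' \<in> S"
      by (auto simp: openin_euclidean_subtopology_iff)
    show "openin mtopology S"
      unfolding openin_mtopology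
    proof (intro conjI allI impI S(1))
      fix u assume u: "u \<in> S"
      then obtain x where x: "u = E x" using S(1) W_E by blast
      obtain ee where ee: "ee > 0" "\<forall>x'\<in>Wc. dist x' u < ee \<longrightarrow> x' \<in> S" using S(2) u by blast
      obtain r where r: "r > 0" "\<forall>y. ds x y < r \<longrightarrow> dist (E x) (E y) < ee"
        using close_i[OF ee(1)] by blast
      show "\<exists>r>0. mball u r \<subseteq> S"
      proof (intro exI[of _ r] conjI r(1) subsetI)
        fix u' assume "u' \<in> mball u r"
        then have u': "u' \<in> Wc" "dr u u' < r" by auto
        then obtain y where y: "u' = E y" using W_E by blast
        have "dist (E x) (E y) < ee" using r(2) u' x y by simp
        then show "u' \<in> S" using ee(2) u' x y by (simp add: dist_commute)
      qed
    qed
  qed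
qed



definition Tset :: "real set" where "Tset = insert 0 (range (\<lambda>k. inverse (real (Suc k))))"

lemma compact_Tset: "compact Tset"
  unfolding Tset_def by (rule compact_sequence_with_limit[OF LIMSEQ_inverse_real_of_nat])

definition f1 :: "real \<times> real \<Rightarrow> real^2" where "f1 p = pv (fst p) (snd p)"
definition f2 :: "real \<times> real \<Rightarrow> real^2" where "f2 p = pv (3 - fst p) (fst p * snd p)"

lemma Wc_eq: "Wc = f1 ` (Tset \<times> range phi) \<union> f2 ` (Tset \<times> range phi)"
proof
  show "Wc \<subseteq> f1 ` (Tset \<times> range phi) \<union> f2 ` (Tset \<times> range phi)"
  proof
    fix u assume "u \<in> Wc"
    then obtain x where x: "u = E x" using W_E by blast
    show "u \<in> f1 ` (Tset \<times> range phi) \<union> f2 ` (Tset \<times> range phi)"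
    proof (cases x)
      case P
      have "u = f2 (0, phi (\<lambda>_. False))" using x P by (simp add: f2_def)
      moreover have "(0, phi (\<lambda>_. False)) \<in> Tset \<times> range phi" by (simp add: Tset_def)
      ultimately show ?thesis by (intro UnI2) (rule image_eqI)
    next
      case (Mp z)
      have "u = f1 (0, phi z)" using x Mp by (simp add: f1_def)
      moreover have "(0, phi z) \<in> Tset \<times> range phi" by (simp add: Tset_def)
      ultimately show ?thesis by (intro UnI1) (rule image_eqI)
    next
      case (Sa k w)
      have "u = f1 (inverse (real (Suc k)), phi w)" using x Sa by (simp add: f1_def inverse_eq_divide)
      moreover have "(inverse (real (Suc k)), phi w) \<in> Tset \<times> range phi" by (simp add: Tset_def)
      ultimately show ?thesis by (intro UnI1) (rule image_eqI)
    next
      case (Sb j w)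
      have "u = f2 (inverse (real (Suc j)), phi w)" using x Sb by (simp add: f2_def inverse_eq_divide)
      moreover have "(inverse (real (Suc j)), phi w) \<in> Tset \<times> range phi" by (simp add: Tset_def)
      ultimately show ?thesis by (intro UnI2) (rule image_eqI)
    qed
  qed
  show "f1 ` (Tset \<times> range phi) \<union> f2 ` (Tset \<times> range phi) \<subseteq> Wc"
  proof
    fix u assume "u \<in> f1 ` (Tset \<times> range phi) \<union> f2 ` (Tset \<times> range phi)"
    then obtain t w where tw: "t \<in> Tset" "u = f1 (t, phi w) \<or> u = f2 (t, phi w)" by blast
    show "u \<in> Wc"
    proof (cases "t = 0")
      case True
      then have "u = E (Mp w) \<or> u = E P" using tw by (auto simp: f1_def f2_def)
      then show ?thesis using E_W[of "Mp w"] E_W[of P] by metis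
    next
      case False
      then obtain k where k: "t = inverse (real (Suc k))" using tw(1) by (auto simp: Tset_def)
      then have "u = E (Sa k w) \<or> u = E (Sb k w)" using tw by (auto simp: f1_def f2_def inverse_eq_divide)
      then show ?thesis using E_W[of "Sa k w"] E_W[of "Sb k w"] by metis
    qed
  qed
qed

lemma compact_Wc: "compact Wc"
proof -
  have c: "compact (Tset \<times> range phi)" by (intro compact_Times compact_Tset compact_K)
  have cf1: "continuous_on UNIV f1" unfolding f1_def by (intro continuous_intros)
  have a: "compact (f1 ` (Tset \<times> range phi))"
    by (rule compact_continuous_image[OF continuous_on_subset[OF cf1 subset_UNIV] c])
  have cf2: "continuous_on UNIV f2" unfolding f2_def by (intro continuous_intros)
  have b: "compact (f2 ` (Tset \<times> range phi))"
    by (rule compact_continuous_image[OF continuous_on_subset[OF cf2 subset_UNIV] c])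
  show ?thesis unfolding Wc_eq by (rule compact_Un[OF a b])
qed

lemma dr_ultra: "dr x z \<le> max (dr x y) (dr y z)"
  by (simp add: dr_def ds_ultra)

lemma totdisc: "totally_disconnected_set Wc"
  unfolding totally_disconnected_set_def
proof (intro allI impI)
  interpret Metric_space Wc dr by (rule metric_W)
  fix S assume SS: "S \<subseteq> Wc \<and> connected S"
  show "\<exists>a. S \<subseteq> {a}"
  proof (rule ccontr)
    assume "\<not> (\<exists>a. S \<subseteq> {a})"
    then obtain u v where uv: "u \<in> S" "v \<in> S" "u \<noteq> v" by blast
    have uW: "u \<in> Wc" "v \<in> Wc" using uv SS by auto
    define r where "r = dr u v"
    have r0: "0 < r" using uW uv(3) nonneg[of u v] zero[of u v] by (simp add: r_def less_le)
    define A where "A = {y \<in> Wc. dr u y < r}"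
    define B where "B = {y \<in> Wc. r \<le> dr u y}"
    have oA: "openin mtopology A"
      unfolding openin_mtopology
    proof (intro conjI allI impI)
      show "A \<subseteq> Wc" by (auto simp: A_def)
      fix y assume y: "y \<in> A"
      show "\<exists>r'>0. mball y r' \<subseteq> A"
      proof (intro exI[of _ "r - dr u y"] conjI subsetI)
        show "0 < r - dr u y" using y by (simp add: A_def)
        fix z assume "z \<in> mball y (r - dr u y)"
        then have z: "z \<in> Wc" "dr y z < r - dr u y" by auto
        have "dr u z \<le> dr u y + dr y z" using triangle[of u y z] y z uW by (auto simp: A_def)
        then show "z \<in> A" using z by (simp add: A_def)
      qed
    qed
    have oB: "openin mtopology B"
      unfolding openin_mtopology
    proof (intro conjI allI impI)
      show "B \<subseteq> Wc" by (auto simp: B_def)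
      fix y assume y: "y \<in> B"
      show "\<exists>r'>0. mball y r' \<subseteq> B"
      proof (intro exI[of _ r] conjI subsetI r0)
        fix z assume "z \<in> mball y r"
        then have z: "z \<in> Wc" "dr y z < r" by auto
        have "dr u y \<le> max (dr u z) (dr z y)" by (rule dr_ultra)
        moreover have "dr z y = dr y z" by (rule commute)
        ultimately have "r \<le> dr u z" using y z by (auto simp: B_def)
        then show "z \<in> B" using z by (simp add: B_def)
      qed
    qed
    have oA': "openin (top_of_set Wc) A" using oA top_eq by simp
    have oB': "openin (top_of_set Wc) B" using oB top_eq by simp
    obtain OA where OA: "open OA" "A = Wc \<inter> OA" using oA' by (auto simp: openin_open)
    obtain OB where OB: "open OB" "B = Wc \<inter> OB" using oB' by (auto simp: openin_open)
    have "OA \<inter> OB \<inter> S = {}"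
    proof (rule ccontr)
      assume "OA \<inter> OB \<inter> S \<noteq> {}"
      then obtain y where y: "y \<in> OA" "y \<in> OB" "y \<in> S" by blast
      then have yW: "y \<in> Wc" using SS by auto
      then have "y \<in> A" "y \<in> B" using y OA(2) OB(2) by auto
      then show False by (simp add: A_def B_def)
    qed
    moreover have "S \<subseteq> OA \<union> OB"
    proof
      fix y assume "y \<in> S"
      then have "y \<in> Wc" using SS by auto
      then have "y \<in> A \<or> y \<in> B" by (auto simp: A_def B_def)
      then show "y \<in> OA \<union> OB" using OA OB by auto
    qed
    ultimately have "OA \<inter> S = {} \<or> OB \<inter> S = {}"
      using connectedD[of S OA OB] SS OA(1) OB(1) by blast
    moreover have "u \<in> OA"
    proof -
      have "dr u u = 0" using uW by simp
      then have "u \<in> A" using uW r0 by (simp add: A_def)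
      then show ?thesis using OA by auto
    qed
    moreover have "v \<in> OB"
    proof -
      have "v \<in> B" using uW by (simp add: B_def r_def)
      then show ?thesis using OB by auto
    qed
    ultimately show False using uv by auto
  qed
qed

lemma limpt: "u \<in> Wc \<Longrightarrow> u islimpt Wc"
proof -
  assume "u \<in> Wc"
  then obtain x where x: "u = E x" using W_E by blast
  show ?thesis unfolding islimpt_approachable
  proof (intro allI impI)
    fix ep :: real assume ep: "0 < ep"
    obtain y where y: "y \<noteq> x" "4 / ep < lv x y" using perf_sym by blast
    have p4: "0 < 4 / ep" using ep by simp
    have pos: "0 < lv x y" using y p4 by linarith
    have "dist (E x) (E y) \<le> 4 / lv x y" using dist_E_le[OF _ pos] y by auto
    also have "\<dots> < 4 / (4 / ep)"
    proof (rule divide_strict_left_mono[OF y(2)])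
      show "(0::real) < 4" by simp
      show "0 < lv x y * (4 / ep)" using pos p4 by (rule mult_pos_pos)
    qed
    also have "\<dots> = ep" using ep by simp
    finally have "dist (E y) (E x) < ep" by (simp add: dist_commute)
    moreover have "E y \<noteq> E x" using y E_inj by blast
    ultimately show "\<exists>x'\<in>Wc. x' \<noteq> u \<and> dist x' u < ep" using x by auto
  qed
qed

lemma cantor_Wc: "cantor_set Wc"
  unfolding cantor_set_def using compact_Wc totdisc limpt by blast

lemma lrs_ds: "\<exists>r0>0. \<forall>y. 0 < ds x y \<longrightarrow> ds x y < r0 \<longrightarrow> ds (Gs x) (Gs y) < ds x y"
proof -
  obtain T where T: "T \<ge> 0" "\<forall>y. y \<noteq> x \<longrightarrow> T < lv x y \<longrightarrow> lv x y < lv (Gs x) (Gs y)"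
    using lrs_sym by blast
  show ?thesis
  proof (intro exI[of _ "1 / (1 + T)"] conjI allI impI)
    show "0 < 1 / (1 + T)" using T by simp
    fix y assume a: "0 < ds x y" "ds x y < 1 / (1 + T)"
    then have ne: "y \<noteq> x" by (auto simp: ds_def)
    have h: "1 / (1 + lv x y) < 1 / (1 + T)" using a ne by (simp add: ds_def eq_commute)
    have h1: "0 < 1 + lv x y" using lv_nonneg[of x y] by linarith
    have h2: "0 < 1 + T" using T by linarith
    have "1 + T < 1 + lv x y" by (rule inv_lt_imp[OF h1 h2 h])
    then have "lv x y < lv (Gs x) (Gs y)" using T ne by simp
    moreover have "Gs x \<noteq> Gs y" using ne Gs_inj by blast
    ultimately show "ds (Gs x) (Gs y) < ds x y"
      using ne h1 by (simp add: ds_def divide_strict_left_mono)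
  qed
qed

lemma cont_Gr: "continuous_on Wc Gr"
  unfolding continuous_on_iff
proof (intro ballI allI impI)
  fix u ep assume u: "u \<in> Wc" and ep: "(0::real) < ep"
  obtain x where x: "u = E x" using u W_E by blast
  obtain r where r: "r > 0" "\<forall>y. ds (Gs x) y < r \<longrightarrow> dist (E (Gs x)) (E y) < ep"
    using close_i[OF ep] by blast
  obtain r0 where r0: "r0 > 0" "\<forall>y. 0 < ds x y \<longrightarrow> ds x y < r0 \<longrightarrow> ds (Gs x) (Gs y) < ds x y"
    using lrs_ds by blast
  obtain \<delta> where \<delta>: "\<delta> > 0" "\<forall>y. dist (E x) (E y) < \<delta> \<longrightarrow> ds x y < min r r0"
    using close_ii[of "min r r0" x] r r0 by auto
  show "\<exists>\<delta>>0. \<forall>x'\<in>Wc. dist x' u < \<delta> \<longrightarrow> dist (Gr x') (Gr u) < ep"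
  proof (intro exI[of _ \<delta>] conjI ballI impI \<delta>(1))
    fix u' assume u': "u' \<in> Wc" "dist u' u < \<delta>"
    then obtain y where y: "u' = E y" using W_E by blast
    have d1: "ds x y < min r r0" using \<delta>(2) u' x y by (simp add: dist_commute)
    show "dist (Gr u') (Gr u) < ep"
    proof (cases "y = x")
      case True then show ?thesis using x y ep by simp
    next
      case False
      then have "0 < ds x y" using ds_nonneg[of x y] ds_zero[of x y] by (auto simp: less_le)
      then have "ds (Gs x) (Gs y) < ds x y" using r0(2) d1 by simp
      then have "ds (Gs x) (Gs y) < r" using d1 by simp
      then have "dist (E (Gs x)) (E (Gs y)) < ep" using r(2) by blast
      then show ?thesis using x y by (simp add: dist_commute)
    qed
  qed
qed

lemma Gr_image: "Gr ` Wc = Wc"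
proof
  show "Gr ` Wc \<subseteq> Wc"
  proof
    fix v assume "v \<in> Gr ` Wc"
    then obtain u where u: "u \<in> Wc" "v = Gr u" by blast
    then obtain x where "u = E x" using W_E by blast
    then show "v \<in> Wc" using u by simp
  qed
  show "Wc \<subseteq> Gr ` Wc"
  proof
    fix u assume "u \<in> Wc"
    then obtain x where x: "u = E x" using W_E by blast
    have "Gr (E (Gi x)) = u" using x by simp
    then show "u \<in> Gr ` Wc" by (metis E_W image_eqI)
  qed
qed

lemma Gr_inj: "inj_on Gr Wc"
proof (rule inj_onI)
  fix u v assume uv: "u \<in> Wc" "v \<in> Wc" "Gr u = Gr v"
  obtain x where x: "u = E x" using uv(1) W_E by blast
  obtain y where y: "v = E y" using uv(2) W_E by blast
  have "E (Gs x) = E (Gs y)" using uv(3) x y by simp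
  then have "Gs x = Gs y" by (rule E_inj)
  then have "x = y" by (rule Gs_inj)
  then show "u = v" using x y by simp
qed

lemma homeo: "\<exists>G'. homeomorphism Wc Wc Gr G'"
  by (rule homeomorphism_compact[OF compact_Wc cont_Gr Gr_image Gr_inj])

lemma lrs_W: "LRS Wc dr Gr"
  unfolding LRS_def
proof (intro ballI)
  fix u assume "u \<in> Wc"
  then obtain x where x: "u = E x" using W_E by blast
  obtain r0 where r0: "r0 > 0" "\<forall>y. 0 < ds x y \<longrightarrow> ds x y < r0 \<longrightarrow> ds (Gs x) (Gs y) < ds x y"
    using lrs_ds by blast
  show "\<exists>\<epsilon>>0. \<forall>y\<in>Wc. 0 < dr u y \<and> dr u y < \<epsilon> \<longrightarrow> dr (Gr u) (Gr y) < dr u y"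
  proof (intro exI[of _ r0] conjI ballI impI r0(1))
    fix v assume "v \<in> Wc" "0 < dr u v \<and> dr u v < r0"
    then obtain y where "v = E y" "0 < ds x y" "ds x y < r0" using W_E x by force
    then show "dr (Gr u) (Gr v) < dr u v" using r0(2) x by simp
  qed
qed

lemma Gr_pow: "(Gr ^^ n) (E x) = E ((Gs ^^ n) x)"
  by (induction n) auto

lemma Gs_pow_Sb: "(Gs ^^ n) (Sb j w) = Sb (j + n) (addn n w)"
  by (induction n) (auto simp: addn_def)

lemma Gs_pow_Mp: "(Gs ^^ n) (Mp z) = Mp (addn n z)"
  by (induction n) (auto simp: addn_def)

fun isS :: "pt \<Rightarrow> bool" where
  "isS (Sa _ _) = True" | "isS (Sb _ _) = True" | "isS _ = False"

fun tm :: "pt \<Rightarrow> int" where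
  "tm (Sa k w) = int k + 1" | "tm (Sb j w) = - int j" | "tm _ = 0"

lemma tm_Gs: "isS x \<Longrightarrow> isS (Gs x) \<and> tm (Gs x) = tm x - 1"
  by (induction x rule: Gs.induct) auto

lemma tm_pow: "isS x \<Longrightarrow> isS ((Gs ^^ n) x) \<and> tm ((Gs ^^ n) x) = tm x - int n"
  by (induction n) (auto dest: tm_Gs)

lemma noper: "n \<ge> 1 \<Longrightarrow> (Gs ^^ n) x = x \<Longrightarrow> x = P"
proof (cases x)
  case (Mp z)
  assume "n \<ge> 1" "(Gs ^^ n) x = x"
  then have "addn n z = z" using Mp Gs_pow_Mp by simp
  then show ?thesis using addn_ne \<open>n \<ge> 1\<close> by blast
next
  case (Sa k w)
  assume "n \<ge> 1" "(Gs ^^ n) x = x"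
  then have "tm x = tm x - int n" using tm_pow[of x n] Sa by simp
  then show ?thesis using \<open>n \<ge> 1\<close> by simp
next
  case (Sb j w)
  assume "n \<ge> 1" "(Gs ^^ n) x = x"
  then have "tm x = tm x - int n" using tm_pow[of x n] Sb by simp
  then show ?thesis using \<open>n \<ge> 1\<close> by simp
qed simp

lemma per_W: "periodic_points Wc Gr = {E P}"
proof
  show "periodic_points Wc Gr \<subseteq> {E P}"
  proof
    fix u assume "u \<in> periodic_points Wc Gr"
    then obtain n where n: "u \<in> Wc" "n \<ge> 1" "(Gr ^^ n) u = u" by (auto simp: periodic_points_def)
    then obtain x where x: "u = E x" using W_E by blast
    then have "E ((Gs ^^ n) x) = E x" using n Gr_pow by simp
    then have "(Gs ^^ n) x = x" using E_inj by blast
    then have "x = P" using noper n by blast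
    then show "u \<in> {E P}" using x by simp
  qed
  have "(Gr ^^ 1) (E P) = E P" by (simp del: E.simps)
  then show "{E P} \<subseteq> periodic_points Wc Gr"
    using E_W[of P] unfolding periodic_points_def by blast
qed

lemma not_trans: "\<not> transitive_on Wc Gr"
proof
  assume tr: "transitive_on Wc Gr"
  define O1 :: "(real^2) set" where "O1 = {v. v $ 1 > 3/2} \<inter> {v. v $ 1 < 9/4}"
  have "open O1" unfolding O1_def
    by (intro open_Int open_halfspace_component_gt_cart open_halfspace_component_lt_cart)
  then have oU: "openin (top_of_set Wc) (Wc \<inter> O1)" by (auto simp: openin_open)
  have "E (Sb 0 (\<lambda>_. False)) \<in> O1" by (simp add: O1_def)
  then have "E (Sb 0 (\<lambda>_. False)) \<in> Wc \<inter> O1" using E_W by blast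
  then have ne: "Wc \<inter> O1 \<noteq> {}" by blast
  obtain n where n: "n \<ge> 1" "(Gr ^^ n) ` (Wc \<inter> O1) \<inter> (Wc \<inter> O1) \<noteq> {}"
    using tr oU ne unfolding transitive_on_def by blast
  then obtain u where u: "u \<in> Wc \<inter> O1" "(Gr ^^ n) u \<in> O1" by blast
  then obtain x where x: "u = E x" using W_E by blast
  have c1: "3/2 < u $ 1" "u $ 1 < 9/4" using u(1) by (auto simp: O1_def)
  obtain j w where jw: "x = Sb j w"
  proof (cases x)
    case P
    then have "u $ 1 = 3" using x by simp
    then show ?thesis using c1 by simp
  next
    case (Mp z)
    then have "u $ 1 = 0" using x by simp
    then show ?thesis using c1 by simp
  next
    case (Sa k w)
    then have "u $ 1 = 1 / real (Suc k)" using x by simp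
    moreover have "1 / real (Suc k) \<le> 1" by simp
    ultimately show ?thesis using c1 by linarith
  next
    case (Sb j w) then show ?thesis using that by blast
  qed
  have "(Gr ^^ n) u = E ((Gs ^^ n) (Sb j w))" using x jw Gr_pow by (simp del: E.simps)
  also have "\<dots> = E (Sb (j + n) (addn n w))" by (simp only: Gs_pow_Sb)
  finally have "(Gr ^^ n) u = E (Sb (j + n) (addn n w))" .
  then have g1: "(Gr ^^ n) u $ 1 = 3 - 1 / real (Suc (j + n))" by simp
  have g2: "(Gr ^^ n) u $ 1 < 9/4" using u(2) by (simp add: O1_def)
  have g3: "1 / real (Suc (j + n)) \<le> 1 / 2" using n by (intro divide_left_mono) auto
  show False using g1 g2 g3 by linarith
qed


lemma Gr_EP: "Gr (E P) = E P" by (simp del: E.simps)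

theorem theoremE:
  shows "\<exists>(W :: (real^2) set) (d :: real^2 \<Rightarrow> real^2 \<Rightarrow> real) (G :: real^2 \<Rightarrow> real^2).
     cantor_set W \<and>
     Metric_space W d \<and> Metric_space.mtopology W d = top_of_set W \<and>
     (\<exists>G'. homeomorphism W W G G') \<and>
     \<not> transitive_on W G \<and>
     LRS W d G \<and>
     (\<exists>p. periodic_points W G = {p} \<and> G p = p)"
proof (rule exI[of _ Wc], rule exI[of _ dr], rule exI[of _ Gr], intro conjI)
  show "cantor_set Wc" by (rule cantor_Wc)
  show "Metric_space Wc dr" by (rule metric_W)
  show "Metric_space.mtopology Wc dr = top_of_set Wc" by (rule top_eq)
  show "\<exists>G'. homeomorphism Wc Wc Gr G'" by (rule homeo)
  show "\<not> transitive_on Wc Gr" by (rule not_trans)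
  show "LRS Wc dr Gr" by (rule lrs_W)
  show "\<exists>p. periodic_points Wc Gr = {p} \<and> Gr p = p"
    using per_W Gr_EP by blast
qed

end
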